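(* Let $p$ be an odd prime, let $k\ge 1$ and $t\ge 0$ be integers, and let $\alpha\in\mathbb{Q}_p$ have the eventually periodic Browkin continued fraction expansion $$\alpha=[0,b_1,\ldots,b_k,\overline{b_{k+1},\ldots,b_{k+t+1}}].$$ Let $B_{-2}=1$, $B_{-1}=0$, $B_i=b_iB_{i-1}+B_{i-2}$ for $i\ge 0$ (with $b_0=0$). Then the naive height of $\alpha$ satisfies $$h(\alpha)\le \frac{8}{p^2}\lvert B_{k+t+1}\rvert_p^2\,\lvert B_k\rvert_p^2.$$
   Context: Every $x\in\mathbb{Q}_p$ has a unique expansion $x=\sum_{i\ge r}a_ip^i$ with $r\in\mathbb{Z}$ and $a_i\in\{-\frac{p-1}{2},\ldots,\frac{p-1}{2}\}$; Browkin's function is $s(x)=\sum_{i=r}^{0}a_ip^i$. The Browkin continued fraction expansion $[b_0,b_1,\ldots]$ of $\alpha_0\in\mathbb{Q}_p$ is obtained by iterating $b_i=s(\alpha_i)$, $\alpha_{i+1}=1/(\alpha_i-b_i)$ as long as $\alpha_i\neq b_i$. The overline denotes the block repeated periodically forever. For an algebraic number $\alpha$ that is a root of a nonzero polynomial $c_dx^d+\cdots+c_0\in\mathbb{Z}[x]$ of degree $d$ equal to the degree of $\alpha$, the naive height is $h(\alpha)=\max_i\lvert c_i\rvert_\infty/\gcd(c_0,\ldots,c_d)$. *)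

theory Defs
  imports Complex_Main "HOL-Computational_Algebra.Computational_Algebra"
begin

definition padic_val_rat :: "nat \<Rightarrow> rat \<Rightarrow> int" where
  "padic_val_rat p q = (case quotient_of q of (a, b) \<Rightarrow>
      int (multiplicity (int p) a) - int (multiplicity (int p) b))"

definition padic_abs_rat :: "nat \<Rightarrow> rat \<Rightarrow> real" where
  "padic_abs_rat p q = (if q = 0 then 0 else real p powr (- real_of_int (padic_val_rat p q)))"

text \<open>A field of characteristic 0 with an absolute value N is (a copy of) Q_p:
  N is a non-archimedean absolute value extending the p-adic absolute value on Q,
  the field is complete for N, and Q is dense in it.  These properties characterize
  Q_p up to isometric isomorphism.\<close>
definition padic_field :: "nat \<Rightarrow> ('a::field_char_0 \<Rightarrow> real) \<Rightarrow> bool" where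
  "padic_field p N \<longleftrightarrow>
     (\<forall>x. N x \<ge> 0) \<and> (\<forall>x. N x = 0 \<longleftrightarrow> x = 0) \<and>
     (\<forall>x y. N (x * y) = N x * N y) \<and>
     (\<forall>x y. N (x + y) \<le> max (N x) (N y)) \<and>
     (\<forall>q. N (of_rat q) = padic_abs_rat p q) \<and>
     (\<forall>f::nat \<Rightarrow> 'a. (\<forall>e>0. \<exists>M. \<forall>m\<ge>M. \<forall>n\<ge>M. N (f m - f n) < e)
          \<longrightarrow> (\<exists>x. (\<lambda>n. N (f n - x)) \<longlonglongrightarrow> 0)) \<and>
     (\<forall>x e. e > 0 \<longrightarrow> (\<exists>q. N (x - of_rat q) < e))"

definition browkin_digits :: "nat \<Rightarrow> int set" where
  "browkin_digits p = {- ((int p - 1) div 2) .. (int p - 1) div 2}"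

definition is_padic_expansion :: "nat \<Rightarrow> ('a::field_char_0 \<Rightarrow> real) \<Rightarrow> 'a \<Rightarrow> (int \<Rightarrow> int) \<Rightarrow> bool" where
  "is_padic_expansion p N x a \<longleftrightarrow>
     (\<forall>i. a i \<in> browkin_digits p) \<and>
     (\<exists>r. (\<forall>i<r. a i = 0) \<and>
          (\<lambda>n. N ((\<Sum>i=r..int n. of_int (a i) * (of_nat p) powi i) - x)) \<longlonglongrightarrow> 0)"

definition browkin_s :: "nat \<Rightarrow> ('a::field_char_0 \<Rightarrow> real) \<Rightarrow> 'a \<Rightarrow> 'a" where
  "browkin_s p N x = (THE y. \<exists>a. is_padic_expansion p N x a \<and>
       y = (\<Sum>i\<in>{i. i \<le> 0 \<and> a i \<noteq> 0}. of_int (a i) * (of_nat p) powi i))"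

fun browkin_alpha :: "nat \<Rightarrow> ('a::field_char_0 \<Rightarrow> real) \<Rightarrow> 'a \<Rightarrow> nat \<Rightarrow> 'a" where
  "browkin_alpha p N x 0 = x"
| "browkin_alpha p N x (Suc n) =
     inverse (browkin_alpha p N x n - browkin_s p N (browkin_alpha p N x n))"

text \<open>Shifted denominators: browkin_B b (i+2) = B_i, with browkin_B b 0 = B_{-2} = 1, browkin_B b 1 = B_{-1} = 0.\<close>
fun browkin_B :: "(nat \<Rightarrow> 'a::field) \<Rightarrow> nat \<Rightarrow> 'a" where
  "browkin_B b 0 = 1"
| "browkin_B b (Suc 0) = 0"
| "browkin_B b (Suc (Suc n)) = b n * browkin_B b (Suc n) + browkin_B b n"

definition naive_height :: "'a::field_char_0 \<Rightarrow> real" where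
  "naive_height x = (THE h. \<exists>P::int poly. P \<noteq> 0 \<and> poly (map_poly of_int P) x = 0 \<and>
      (\<forall>Q::int poly. Q \<noteq> 0 \<and> poly (map_poly of_int Q) x = 0 \<longrightarrow> degree P \<le> degree Q) \<and>
      h = real_of_int (Max (abs ` set (coeffs P))) / real_of_int (content P))"

end

theory Submission
  imports Defs
begin

locale padic =
  fixes p :: nat and N :: "'a::field_char_0 \<Rightarrow> real"
  assumes prime_p: "prime p" and odd_p: "odd p" and pf: "padic_field p N"
begin

lemma N_nonneg: "N x \<ge> 0" using pf unfolding padic_field_def by blast
lemma N_zero_iff: "N x = 0 \<longleftrightarrow> x = 0" using pf unfolding padic_field_def by blast
lemma N_mult: "N (x * y) = N x * N y" using pf unfolding padic_field_def by blast
lemma N_ultra: "N (x + y) \<le> max (N x) (N y)" using pf unfolding padic_field_def by blast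
lemma N_rat: "N (of_rat q) = padic_abs_rat p q" using pf unfolding padic_field_def by blast
lemma N_dense: "e > 0 \<Longrightarrow> \<exists>q. N (x - of_rat q) < e" using pf unfolding padic_field_def by blast

lemma N_0[simp]: "N 0 = 0" using N_zero_iff by simp

lemma p_ge2: "p \<ge> 2" using prime_p by (simp add: prime_ge_2_nat)
lemma p_ge3: "p \<ge> 3" using p_ge2 odd_p by (cases "p = 2") auto

lemma N_one: "N 1 = 1"
proof -
  have "N 1 = N 1 * N 1" using N_mult[of 1 1] by simp
  moreover have "N 1 \<noteq> 0" using N_zero_iff by simp
  ultimately show ?thesis by (metis mult_cancel_left1)
qed

lemma N_minus1: "N (-1) = 1"
proof -
  have "N (-1) * N (-1) = 1" using N_mult[of "-1" "-1"] N_one by simp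
  moreover have "N (-1) \<ge> 0" by (rule N_nonneg)
  ultimately show ?thesis by (metis abs_of_nonneg real_sqrt_abs real_sqrt_one power2_eq_square)
qed

lemma N_uminus: "N (- x) = N x"
  using N_mult[of "-1" x] N_minus1 by simp

lemma N_diff_comm: "N (x - y) = N (y - x)"
  using N_uminus[of "x - y"] by simp

lemma N_diff: "N (x - y) \<le> max (N x) (N y)"
  using N_ultra[of x "-y"] N_uminus[of y] by simp

lemma N_inverse: "N (inverse x) = inverse (N x)"
proof (cases "x = 0")
  case True then show ?thesis using N_zero_iff by simp
next
  case False
  have "N (inverse x) * N x = 1" using N_mult[of "inverse x" x] False N_one by simp
  then show ?thesis by (metis inverse_unique mult.commute)
qed

lemma N_divide: "N (x / y) = N x / N y"
  by (simp add: divide_inverse N_mult N_inverse)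

lemma N_power: "N (x ^ n) = N x ^ n"
  by (induction n) (simp_all add: N_one N_mult)

lemma N_powi: "N (x powi i) = N x powi i"
  by (cases "i \<ge> 0") (simp_all add: power_int_def N_power N_inverse)

lemma N_strict: "N y < N x \<Longrightarrow> N (x + y) = N x"
proof -
  assume a: "N y < N x"
  have "N (x + y) \<le> N x" using N_ultra[of x y] a by simp
  moreover have "N x \<le> max (N (x + y)) (N y)" using N_ultra[of "x + y" "-y"] N_uminus[of y] by simp
  ultimately show ?thesis using a by linarith
qed

lemma N_sum_le: "(\<And>i. i \<in> A \<Longrightarrow> N (f i) \<le> c) \<Longrightarrow> c \<ge> 0 \<Longrightarrow> N (sum f A) \<le> c"
proof (induction A rule: infinite_finite_induct)
  case (infinite A) then show ?case using N_zero_iff by simp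
next
  case empty then show ?case using N_zero_iff by simp
next
  case (insert x F)
  then show ?case using N_ultra[of "f x" "sum f F"] by (smt (verit) insertCI sum.insert)
qed

lemma N_of_int: "N (of_int z) = padic_abs_rat p (of_int z)"
  using N_rat[of "of_int z"] by simp

lemma padic_abs_int: "z \<noteq> 0 \<Longrightarrow> padic_abs_rat p (of_int z) = real p powr (- real (multiplicity (int p) z))"
  by (simp add: padic_abs_rat_def padic_val_rat_def)

lemma N_int_le1: "N (of_int z) \<le> 1"
proof (cases "z = 0")
  case True then show ?thesis using N_zero_iff by simp
next
  case False
  have "real p powr (- real (multiplicity (int p) z)) \<le> 1"
    using p_ge2 powr_mono[of "- real (multiplicity (int p) z)" 0 "real p"] by simp
  then show ?thesis using N_of_int padic_abs_int False by simp
qed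

lemma N_int_unit: "\<not> int p dvd z \<Longrightarrow> N (of_int z) = 1"
proof -
  assume a: "\<not> int p dvd z"
  then have "z \<noteq> 0" by auto
  moreover have "multiplicity (int p) z = 0" using a by (simp add: not_dvd_imp_multiplicity_0)
  ultimately show ?thesis using N_of_int padic_abs_int p_ge2 by simp
qed

lemma N_p: "N (of_nat p) = 1 / real p"
proof -
  have "multiplicity (int p) (int p) = 1"
    using prime_p by (intro multiplicity_self) (auto simp: prime_int_iff)
  then have "N (of_int (int p)) = real p powr (-1)" using N_of_int[of "int p"] padic_abs_int[of "int p"] p_ge2 by simp
  then show ?thesis using p_ge2 by (simp add: powr_minus_divide)
qed

lemma N_pdvd: "int p dvd z \<Longrightarrow> N (of_int z) \<le> 1 / real p"
proof -
  assume "int p dvd z"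
  then obtain w where w: "z = int p * w" by blast
  have "N (of_int z) = N (of_nat p) * N (of_int w)" using w N_mult by simp
  also have "\<dots> \<le> 1 / real p" using N_p N_int_le1[of w] p_ge2 N_nonneg[of "of_int w"]
    by (simp add: divide_right_mono)
  finally show ?thesis .
qed

lemma N_ppow: "N ((of_nat p :: 'a) ^ n) = 1 / real p ^ n"
  by (simp add: N_power N_p power_one_over)

lemma N_ppowi: "N ((of_nat p :: 'a) powi i) = real p powi (- i)"
  by (simp add: N_powi N_p power_int_minus inverse_eq_divide power_int_divide_distrib)

definition hh :: int where "hh = (int p - 1) div 2"

lemma two_hh: "2 * hh = int p - 1"
proof -
  obtain k where k: "p = 2 * k + 1" using odd_p by (auto elim!: oddE)
  then have "int p - 1 = 2 * int k" by simp
  then show ?thesis unfolding hh_def by simp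
qed

lemma digits_iff: "d \<in> browkin_digits p \<longleftrightarrow> - hh \<le> d \<and> d \<le> hh"
  unfolding browkin_digits_def hh_def by simp

lemma digit_not_dvd:
  assumes a1: "d \<in> browkin_digits p" and a2: "d \<noteq> 0" shows "\<not> int p dvd d"
proof
  assume a3: "int p dvd d"
  note a = a1 a2 a3
  have "\<bar>int p\<bar> \<le> \<bar>d\<bar>" by (rule dvd_imp_le_int[OF a2 a3])
  then have "int p \<le> \<bar>d\<bar>" by simp
  moreover have "-hh \<le> d \<and> d \<le> hh" using a1 by (simp only: digits_iff)
  then have "\<bar>d\<bar> \<le> hh" by (simp add: abs_le_iff)
  ultimately show False using two_hh p_ge2 by linarith
qed

lemma reduce_digit: "\<exists>d \<in> browkin_digits p. int p dvd (d0 - d)"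
proof -
  define d where "d = (d0 + hh) mod int p - hh"
  have p0: "int p > 0" using p_ge2 by simp
  have "0 \<le> (d0 + hh) mod int p" "(d0 + hh) mod int p < int p" using p0 by auto
  then have "d \<in> browkin_digits p" unfolding digits_iff d_def using two_hh by linarith
  moreover have "d0 - d = int p * ((d0 + hh) div int p)"
  proof -
    have "d0 - d = (d0 + hh) - (d0 + hh) mod int p" unfolding d_def by simp
    also have "\<dots> = int p * ((d0 + hh) div int p)" by (rule minus_mod_eq_mult_div)
    finally show ?thesis .
  qed
  ultimately show ?thesis by (intro bexI[of _ d]) auto
qed

lemma rat_digit:
  assumes "N (of_rat q :: 'a) \<le> 1"
  shows "\<exists>d0::int. N (of_rat q - of_int d0 :: 'a) \<le> 1 / real p"
proof -
  obtain u v where uv: "quotient_of q = (u, v)" by (cases "quotient_of q") auto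
  have v0: "v > 0" using uv quotient_of_denom_pos by blast
  have cop: "coprime u v" using uv quotient_of_coprime by blast
  have q: "q = of_int u / of_int v" using uv quotient_of_div by blast
  have nv: "\<not> int p dvd v"
  proof
    assume pv: "int p dvd v"
    have pu: "\<not> int p dvd u"
    proof
      assume "int p dvd u"
      then have "is_unit (int p)" using pv cop coprime_common_divisor by blast
      then show False using p_ge2 by simp
    qed
    then have u0: "u \<noteq> 0" by auto
    have "N (of_rat q :: 'a) = N (of_int u :: 'a) / N (of_int v)" using q N_divide by (simp add: of_rat_divide)
    also have "N (of_int u :: 'a) = 1" using N_int_unit pu by blast
    finally have e: "N (of_rat q :: 'a) = 1 / N (of_int v :: 'a)" .
    have "N (of_int v :: 'a) \<le> 1 / real p" using N_pdvd pv by blast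
    moreover have "N (of_int v :: 'a) > 0" using v0 N_nonneg N_zero_iff by (metis less_le of_int_eq_0_iff less_irrefl)
    ultimately have "1 / N (of_int v :: 'a) \<ge> real p" using p_ge2
      by (simp add: field_simps)
    then show False using e assms p_ge2 by simp
  qed
  have "coprime v (int p)"
  proof -
    have "prime (int p)" using prime_p by (simp add: prime_nat_int_transfer)
    then have "coprime (int p) v" using nv by (rule prime_imp_coprime)
    then show ?thesis by (simp add: coprime_commute)
  qed
  then have "gcd v (int p) = 1" by simp
  then obtain w z where "w * v + z * int p = 1" using bezout_int[of v "int p"] by metis
  then have "1 - v * w = int p * z" by (simp add: algebra_simps)
  then have "int p dvd (1 - v * w)" by simp
  moreover have "u - u * w * v = u * (1 - v * w)" by (simp add: algebra_simps)
  ultimately have dv: "int p dvd (u - u * w * v)" by simp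
  have qa: "(of_rat q :: 'a) = of_int u / of_int v" using q by (simp add: of_rat_divide)
  have "(of_rat q - of_int (u * w) :: 'a) = of_int (u - u * w * v) / of_int v"
    unfolding qa using v0 by (simp add: field_simps)
  then have "N (of_rat q - of_int (u * w) :: 'a) = N (of_int (u - u * w * v) :: 'a)"
    using N_divide N_int_unit[OF nv] by simp
  also have "\<dots> \<le> 1 / real p" using N_pdvd dv by blast
  finally show ?thesis by blast
qed

lemma digit_step:
  assumes "N y \<le> 1"
  shows "\<exists>d \<in> browkin_digits p. N (y - of_int d) \<le> 1 / real p"
proof -
  have pp: "1 / real p > 0" using p_ge2 by simp
  obtain q where q: "N (y - of_rat q) < 1 / real p" using N_dense[OF pp] by blast
  have "N (of_rat q :: 'a) \<le> 1"
  proof -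
    have "(of_rat q :: 'a) = y - (y - of_rat q)" by simp
    then have "N (of_rat q :: 'a) \<le> max (N y) (N (y - of_rat q))" using N_diff by metis
    moreover have "1 / real p \<le> 1" using p_ge2 by simp
    ultimately show ?thesis using assms q by linarith
  qed
  then obtain d0 where d0: "N (of_rat q - of_int d0 :: 'a) \<le> 1 / real p" using rat_digit by blast
  obtain d where d: "d \<in> browkin_digits p" "int p dvd (d0 - d)" using reduce_digit by blast
  have eq: "y - of_int d = (y - of_rat q) + ((of_rat q - of_int d0) + of_int (d0 - d))" by simp
  have c: "N (of_int (d0 - d) :: 'a) \<le> 1 / real p" using N_pdvd d(2) by blast
  have "N ((of_rat q - of_int d0) + of_int (d0 - d) :: 'a) \<le> max (N (of_rat q - of_int d0 :: 'a)) (N (of_int (d0 - d) :: 'a))"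
    by (rule N_ultra)
  then have bc: "N ((of_rat q - of_int d0) + of_int (d0 - d) :: 'a) \<le> 1 / real p" using c d0 by simp
  have "N (y - of_int d) \<le> max (N (y - of_rat q)) (N ((of_rat q - of_int d0) + of_int (d0 - d) :: 'a))"
    unfolding eq by (rule N_ultra)
  then have "N (y - of_int d) \<le> 1 / real p" using bc q by simp
  then show ?thesis using d(1) by blast
qed

end

context padic begin

abbreviation pw :: "int \<Rightarrow> 'a" where "pw i \<equiv> (of_nat p :: 'a) powi i"

lemma p_ne0: "(of_nat p :: 'a) \<noteq> 0" using p_ge2 by simp

lemma sum_extend:
  assumes "\<And>i. i < r \<Longrightarrow> g i = 0" "r0 \<le> r"
  shows "sum g {r..n} = sum g {r0..(n::int)}"
  by (rule sum.mono_neutral_left) (use assms in auto)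

lemma sum_int_shift: "sum g {r..r + int n} = (\<Sum>l\<le>n. g (r + int l))"
proof -
  have "{r..r + int n} = (\<lambda>l. r + int l) ` {..n}"
  proof (rule set_eqI, rule iffI)
    fix i assume "i \<in> {r..r + int n}"
    then show "i \<in> (\<lambda>l. r + int l) ` {..n}" by (intro image_eqI[of _ _ "nat (i - r)"]) auto
  qed auto
  moreover have "inj_on (\<lambda>l. r + int l) {..n}" by (auto simp: inj_on_def)
  ultimately show ?thesis by (simp add: sum.reindex)
qed

lemma N_term_le:
  "N (of_int d * pw i) \<le> real p powi (- i)"
proof -
  have "N (of_int d * pw i) = N (of_int d :: 'a) * real p powi (- i)" by (simp add: N_mult N_ppowi)
  also have "\<dots> \<le> real p powi (- i)"
    using N_int_le1[of d] N_nonneg[of "of_int d"] p_ge2 by (simp add: mult_left_le_one_le)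
  finally show ?thesis .
qed

lemma ppowi_mono: "i \<le> j \<Longrightarrow> real p powi i \<le> real p powi j"
  using p_ge2 by (intro power_int_increasing) auto

lemma ppowi_strict: "i < j \<Longrightarrow> real p powi i < real p powi j"
  using p_ge2 by (intro power_int_strict_increasing) auto

lemma exp_unique:
  assumes ea: "is_padic_expansion p N x a" and eb: "is_padic_expansion p N x a'"
  shows "a = a'"
proof (rule ccontr)
  assume ne: "a \<noteq> a'"
  obtain r where r: "\<forall>i<r. a i = 0"
    and la: "(\<lambda>n. N ((\<Sum>i=r..int n. of_int (a i) * pw i) - x)) \<longlonglongrightarrow> 0"
    using ea unfolding is_padic_expansion_def by blast
  obtain r' where r': "\<forall>i<r'. a' i = 0"
    and lb: "(\<lambda>n. N ((\<Sum>i=r'..int n. of_int (a' i) * pw i) - x)) \<longlonglongrightarrow> 0"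
    using eb unfolding is_padic_expansion_def by blast
  have da: "\<forall>i. a i \<in> browkin_digits p" "\<forall>i. a' i \<in> browkin_digits p"
    using ea eb unfolding is_padic_expansion_def by auto
  define r0 where "r0 = min r r'"
  define \<delta> where "\<delta> i = a i - a' i" for i
  have d0: "\<delta> i = 0" if "i < r0" for i using that r r' unfolding r0_def \<delta>_def by auto
  obtain i0 where i0: "\<delta> i0 \<noteq> 0" using ne unfolding \<delta>_def by (auto simp: fun_eq_iff)
  have "i0 \<ge> r0" using d0 i0 by force
  then have ex: "\<exists>l. \<delta> (r0 + int l) \<noteq> 0" using i0 by (intro exI[of _ "nat (i0 - r0)"]) auto
  define l where "l = (LEAST l. \<delta> (r0 + int l) \<noteq> 0)"
  define j where "j = r0 + int l"
  have dj: "\<delta> j \<noteq> 0" unfolding j_def l_def using LeastI_ex[OF ex] .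
  have dlt: "\<delta> i = 0" if "i < j" for i
  proof (cases "i < r0")
    case True then show ?thesis using d0 by blast
  next
    case False
    then have "nat (i - r0) < l" using that unfolding j_def by auto
    then have "\<delta> (r0 + int (nat (i - r0))) = 0" unfolding l_def using not_less_Least by blast
    then show ?thesis using False by simp
  qed
  have dbound: "\<bar>\<delta> i\<bar> \<le> 2 * hh" for i
  proof -
    have "-hh \<le> a i" "a i \<le> hh" "-hh \<le> a' i" "a' i \<le> hh" using da digits_iff by blast+
    then show ?thesis unfolding \<delta>_def by (simp add: abs_le_iff)
  qed
  have ndj: "\<not> int p dvd \<delta> j"
  proof
    assume "int p dvd \<delta> j"
    then have "int p \<le> \<bar>\<delta> j\<bar>" using dvd_imp_le_int[of "\<delta> j" "int p"] dj by simp
    then show False using dbound[of j] two_hh by linarith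
  qed
  have Neq: "N ((\<Sum>i=r..int n. of_int (a i) * pw i) - (\<Sum>i=r'..int n. of_int (a' i) * pw i)) = real p powi (- j)"
    if n: "int n \<ge> j" for n
  proof -
    have s1: "(\<Sum>i=r..int n. of_int (a i) * pw i) = (\<Sum>i=r0..int n. of_int (a i) * pw i)"
      by (rule sum_extend) (use r in \<open>auto simp: r0_def\<close>)
    have s2: "(\<Sum>i=r'..int n. of_int (a' i) * pw i) = (\<Sum>i=r0..int n. of_int (a' i) * pw i)"
      by (rule sum_extend) (use r' in \<open>auto simp: r0_def\<close>)
    have "(\<Sum>i=r0..int n. of_int (a i) * pw i) - (\<Sum>i=r0..int n. of_int (a' i) * pw i)
        = (\<Sum>i=r0..int n. of_int (\<delta> i) * pw i)"
      by (simp add: \<delta>_def sum_subtractf[symmetric] algebra_simps)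
    also have "\<dots> = (\<Sum>i=j..int n. of_int (\<delta> i) * pw i)"
      by (rule sum_extend[symmetric]) (use dlt in \<open>auto simp: j_def\<close>)
    also have "{j..int n} = insert j {j+1..int n}" using n by auto
    also have "(\<Sum>i\<in>insert j {j+1..int n}. of_int (\<delta> i) * pw i)
       = of_int (\<delta> j) * pw j + (\<Sum>i=j+1..int n. of_int (\<delta> i) * pw i)" by simp
    finally have eq: "(\<Sum>i=r0..int n. of_int (a i) * pw i) - (\<Sum>i=r0..int n. of_int (a' i) * pw i)
       = of_int (\<delta> j) * pw j + (\<Sum>i=j+1..int n. of_int (\<delta> i) * pw i)" .
    have N1: "N (of_int (\<delta> j) * pw j) = real p powi (- j)"
      using N_int_unit[OF ndj] by (simp add: N_mult N_ppowi)
    have N2: "N (\<Sum>i=j+1..int n. of_int (\<delta> i) * pw i) \<le> real p powi (- (j + 1))"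
    proof (rule N_sum_le)
      fix i assume "i \<in> {j+1..int n}"
      then show "N (of_int (\<delta> i) * pw i) \<le> real p powi (- (j + 1))"
        using N_term_le[of "\<delta> i" i] ppowi_mono[of "-i" "-(j+1)"] by auto
    qed (use p_ge2 in auto)
    have "real p powi (- (j + 1)) < real p powi (- j)" by (rule ppowi_strict) simp
    then have "N (\<Sum>i=j+1..int n. of_int (\<delta> i) * pw i) < N (of_int (\<delta> j) * pw j)" using N1 N2 by linarith
    then have "N (of_int (\<delta> j) * pw j + (\<Sum>i=j+1..int n. of_int (\<delta> i) * pw i)) = real p powi (- j)"
      using N_strict N1 by simp
    then show ?thesis using eq s1 s2 by simp
  qed
  have pos: "real p powi (- j) > 0" using p_ge2 by simp
  have "eventually (\<lambda>n. N ((\<Sum>i=r..int n. of_int (a i) * pw i) - x) < real p powi (- j)) sequentially"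
    using order_tendstoD(2)[OF la pos] .
  moreover have "eventually (\<lambda>n. N ((\<Sum>i=r'..int n. of_int (a' i) * pw i) - x) < real p powi (- j)) sequentially"
    using order_tendstoD(2)[OF lb pos] .
  moreover have "eventually (\<lambda>n. int n \<ge> j) sequentially"
    by (rule eventually_sequentiallyI[of "nat j"]) auto
  ultimately have "eventually (\<lambda>n. N ((\<Sum>i=r..int n. of_int (a i) * pw i) - x) < real p powi (- j) \<and>
    N ((\<Sum>i=r'..int n. of_int (a' i) * pw i) - x) < real p powi (- j) \<and> int n \<ge> j) sequentially"
    by (intro eventually_conj)
  then obtain n where n: "N ((\<Sum>i=r..int n. of_int (a i) * pw i) - x) < real p powi (- j)"
    "N ((\<Sum>i=r'..int n. of_int (a' i) * pw i) - x) < real p powi (- j)" "int n \<ge> j"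
    unfolding eventually_sequentially by blast
  have "(\<Sum>i=r..int n. of_int (a i) * pw i) - (\<Sum>i=r'..int n. of_int (a' i) * pw i)
     = ((\<Sum>i=r..int n. of_int (a i) * pw i) - x) - ((\<Sum>i=r'..int n. of_int (a' i) * pw i) - x)" by simp
  then have "N ((\<Sum>i=r..int n. of_int (a i) * pw i) - (\<Sum>i=r'..int n. of_int (a' i) * pw i)) < real p powi (- j)"
    using N_diff[of "(\<Sum>i=r..int n. of_int (a i) * pw i) - x" "(\<Sum>i=r'..int n. of_int (a' i) * pw i) - x"] n(1,2) by simp
  then show False using Neq[OF n(3)] by simp
qed

end

context padic begin

lemma N_int_nz: "z \<noteq> 0 \<Longrightarrow> N (of_int z :: 'a) = 1 / real p ^ multiplicity (int p) z"
  using N_of_int[of z] padic_abs_int[of z] p_ge2 by (simp add: powr_minus powr_realpow divide_inverse)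

lemma N_bound_exists: "\<exists>R::nat. N x \<le> real p ^ R"
proof -
  obtain q where q: "N (x - of_rat q) < 1" using N_dense[of 1 x] by auto
  obtain u v where uv: "quotient_of q = (u, v)" by (cases "quotient_of q") auto
  have v0: "v > 0" using uv quotient_of_denom_pos by blast
  have qa: "(of_rat q :: 'a) = of_int u / of_int v" using quotient_of_div[OF uv] by (simp add: of_rat_divide)
  define R where "R = multiplicity (int p) v"
  have "N (of_rat q :: 'a) = N (of_int u :: 'a) / N (of_int v :: 'a)" unfolding qa by (rule N_divide)
  also have "\<dots> = N (of_int u :: 'a) * real p ^ R" using N_int_nz[of v] v0 unfolding R_def by simp
  also have "\<dots> \<le> real p ^ R" using N_int_le1[of u] p_ge2 by (simp add: mult_left_le_one_le N_nonneg)
  finally have nq: "N (of_rat q :: 'a) \<le> real p ^ R" .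
  have "x = (x - of_rat q) + of_rat q" by simp
  then have "N x \<le> max (N (x - of_rat q)) (N (of_rat q :: 'a))" by (metis N_ultra)
  moreover have "1 \<le> real p ^ R" using p_ge2 by simp
  ultimately have "N x \<le> real p ^ R" using q nq by linarith
  then show ?thesis by blast
qed

definition dstep :: "'a \<Rightarrow> int" where
  "dstep y = (SOME d. d \<in> browkin_digits p \<and> N (y - of_int d) \<le> 1 / real p)"

lemma dstep: assumes "N y \<le> 1" shows "dstep y \<in> browkin_digits p \<and> N (y - of_int (dstep y)) \<le> 1 / real p"
proof -
  from digit_step[OF assms] obtain d where "d \<in> browkin_digits p \<and> N (y - of_int d) \<le> 1 / real p" by blast
  then show ?thesis unfolding dstep_def by (rule someI)
qed

definition rstep :: "'a \<Rightarrow> 'a" where "rstep y = (y - of_int (dstep y)) / of_nat p"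

lemma rstep_le: "N y \<le> 1 \<Longrightarrow> N (rstep y) \<le> 1"
proof -
  assume a: "N y \<le> 1"
  have "N (rstep y) = N (y - of_int (dstep y)) / (1 / real p)" unfolding rstep_def by (simp add: N_divide N_p)
  also have "\<dots> \<le> (1 / real p) / (1 / real p)" using dstep[OF a] p_ge2 by (intro divide_right_mono) auto
  also have "\<dots> = 1" using p_ge2 by simp
  finally show ?thesis .
qed

lemma exp_exists: "\<exists>a. is_padic_expansion p N x a"
proof -
  obtain R where R: "N x \<le> real p ^ R" using N_bound_exists by blast
  define y0 where "y0 = x * (of_nat p) ^ R"
  have y0: "N y0 \<le> 1" unfolding y0_def using R p_ge2 by (simp add: N_mult N_ppow field_simps)
  define rem where "rem n = (rstep ^^ n) y0" for n
  define dig where "dig n = dstep (rem n)" for n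
  have rem_le: "N (rem n) \<le> 1" for n unfolding rem_def by (induction n) (use y0 rstep_le in auto)
  have rem_Suc: "rem (Suc n) = (rem n - of_int (dig n)) / of_nat p" for n
    unfolding rem_def dig_def by (simp add: rstep_def)
  have dig_d: "dig n \<in> browkin_digits p" for n unfolding dig_def using dstep[OF rem_le] by blast
  have ident: "y0 = (\<Sum>l<n. of_int (dig l) * of_nat p ^ l) + rem n * of_nat p ^ n" for n
  proof (induction n)
    case 0 then show ?case by (simp add: rem_def)
  next
    case (Suc n)
    have "rem n = of_int (dig n) + rem (Suc n) * of_nat p" using rem_Suc[of n] p_ne0 by (simp add: field_simps)
    then show ?case using Suc by (simp add: algebra_simps)
  qed
  define a where "a i = (if i \<ge> - int R then dig (nat (i + int R)) else 0)" for i
  have a_d: "a i \<in> browkin_digits p" for i unfolding a_def using dig_d by (simp add: digits_iff) (use hh_def two_hh in linarith)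
  have a0: "\<forall>i < - int R. a i = 0" unfolding a_def by auto
  have sum_eq: "(\<Sum>i = - int R..int n. of_int (a i) * pw i) - x = - (rem (n + R + 1) * of_nat p ^ (n + 1))" for n
  proof -
    have "(\<Sum>i = - int R..int n. of_int (a i) * pw i) = (\<Sum>i = - int R.. - int R + int (n + R). of_int (a i) * pw i)"
      by simp
    also have "\<dots> = (\<Sum>l\<le>n + R. of_int (a (- int R + int l)) * pw (- int R + int l))"
      by (rule sum_int_shift)
    also have "\<dots> = (\<Sum>l\<le>n + R. of_int (dig l) * of_nat p ^ l) / of_nat p ^ R"
      unfolding sum_divide_distrib
    proof (rule sum.cong)
      fix l assume "l \<in> {..n + R}"
      have e: "- int R + int l = int l + - int R" by simp
      have "pw (- int R + int l) = pw (int l) * pw (- int R)" unfolding e by (rule power_int_add) (use p_ne0 in simp)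
      also have "\<dots> = of_nat p ^ l / of_nat p ^ R" by (simp add: power_int_minus divide_inverse)
      finally show "of_int (a (- int R + int l)) * pw (- int R + int l) = of_int (dig l) * of_nat p ^ l / of_nat p ^ R"
        unfolding a_def by simp
    qed simp
    also have "(\<Sum>l\<le>n + R. of_int (dig l) * of_nat p ^ l) = y0 - rem (n + R + 1) * of_nat p ^ (n + R + 1)"
      using ident[of "n + R + 1"] by (simp add: lessThan_Suc_atMost[symmetric])
    also have "(y0 - rem (n + R + 1) * of_nat p ^ (n + R + 1)) / of_nat p ^ R = x - rem (n + R + 1) * of_nat p ^ (n + 1)"
      unfolding y0_def using p_ne0 by (simp add: field_simps power_add)
    finally show ?thesis by simp
  qed
  have lim: "(\<lambda>n. N ((\<Sum>i = - int R..int n. of_int (a i) * pw i) - x)) \<longlonglongrightarrow> 0"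
  proof (rule tendsto_sandwich[of "\<lambda>_. 0" _ _ "\<lambda>n. (1 / real p) ^ (n + 1)"])
    show "\<forall>\<^sub>F n in sequentially. 0 \<le> N ((\<Sum>i = - int R..int n. of_int (a i) * pw i) - x)"
      by (simp add: N_nonneg)
    show "\<forall>\<^sub>F n in sequentially. N ((\<Sum>i = - int R..int n. of_int (a i) * pw i) - x) \<le> (1 / real p) ^ (n + 1)"
    proof (intro always_eventually allI)
      fix n
      have "N ((\<Sum>i = - int R..int n. of_int (a i) * pw i) - x) = N (rem (n + R + 1)) * (1 / real p) ^ (n + 1)"
        unfolding sum_eq by (simp add: N_uminus N_mult N_ppow N_p power_one_over del: power_Suc)
      also have "\<dots> \<le> (1 / real p) ^ (n + 1)" using rem_le[of "n + R + 1"] N_nonneg[of "rem (n + R + 1)"]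
        by (intro mult_left_le_one_le) auto
      finally show "N ((\<Sum>i = - int R..int n. of_int (a i) * pw i) - x) \<le> (1 / real p) ^ (n + 1)" .
    qed
    have "(\<lambda>n. (1 / real p) ^ n) \<longlonglongrightarrow> 0" using p_ge2 by (intro LIMSEQ_power_zero) auto
    then show "(\<lambda>n. (1 / real p) ^ (n + 1)) \<longlonglongrightarrow> 0" by (rule LIMSEQ_ignore_initial_segment)
  qed simp
  show ?thesis unfolding is_padic_expansion_def
    using a_d a0 lim by blast
qed

end

context padic begin

lemma s_eq:
  assumes "is_padic_expansion p N x a"
  shows "browkin_s p N x = (\<Sum>i\<in>{i. i \<le> 0 \<and> a i \<noteq> 0}. of_int (a i) * pw i)"
  unfolding browkin_s_def
proof (rule the_equality)
  show "\<exists>a'. is_padic_expansion p N x a' \<and> (\<Sum>i\<in>{i. i \<le> 0 \<and> a i \<noteq> 0}. of_int (a i) * pw i)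
      = (\<Sum>i\<in>{i. i \<le> 0 \<and> a' i \<noteq> 0}. of_int (a' i) * pw i)" using assms by blast
next
  fix y assume "\<exists>a'. is_padic_expansion p N x a' \<and> y = (\<Sum>i\<in>{i. i \<le> 0 \<and> a' i \<noteq> 0}. of_int (a' i) * pw i)"
  then obtain a' where "is_padic_expansion p N x a'" "y = (\<Sum>i\<in>{i. i \<le> 0 \<and> a' i \<noteq> 0}. of_int (a' i) * pw i)" by blast
  moreover have "a' = a" using exp_unique[OF assms calculation(1)] by simp
  ultimately show "y = (\<Sum>i\<in>{i. i \<le> 0 \<and> a i \<noteq> 0}. of_int (a i) * pw i)" by simp
qed

lemma s_sum:
  assumes "is_padic_expansion p N x a" "\<forall>i<r. a i = 0" "r0 \<le> r" "r0 \<le> 0"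
  shows "browkin_s p N x = (\<Sum>i=r0..0. of_int (a i) * pw i)"
  unfolding s_eq[OF assms(1)]
proof (rule sum.mono_neutral_left)
  show "{i. i \<le> 0 \<and> a i \<noteq> 0} \<subseteq> {r0..0}" using assms(2,3) by (auto simp: not_less[symmetric])
qed auto

lemma s_close: "N (x - browkin_s p N x) \<le> 1 / real p"
proof -
  obtain a where ea: "is_padic_expansion p N x a" using exp_exists by blast
  then obtain r where r: "\<forall>i<r. a i = 0"
    and la: "(\<lambda>n. N ((\<Sum>i=r..int n. of_int (a i) * pw i) - x)) \<longlonglongrightarrow> 0"
    unfolding is_padic_expansion_def by blast
  define r0 where "r0 = min r 0"
  have s: "browkin_s p N x = (\<Sum>i=r0..0. of_int (a i) * pw i)"
    by (rule s_sum[OF ea r]) (auto simp: r0_def)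
  have pos: "1 / real p > 0" using p_ge2 by simp
  obtain n where n: "N ((\<Sum>i=r..int n. of_int (a i) * pw i) - x) < 1 / real p"
    using order_tendstoD(2)[OF la pos] unfolding eventually_sequentially by blast
  have "(\<Sum>i=r..int n. of_int (a i) * pw i) = (\<Sum>i=r0..int n. of_int (a i) * pw i)"
    by (rule sum_extend) (use r in \<open>auto simp: r0_def\<close>)
  also have "{r0..int n} = {r0..0} \<union> {1..int n}" by (auto simp: r0_def)
  also have "(\<Sum>i\<in>{r0..0} \<union> {1..int n}. of_int (a i) * pw i)
      = (\<Sum>i=r0..0. of_int (a i) * pw i) + (\<Sum>i=1..int n. of_int (a i) * pw i)"
    by (rule sum.union_disjoint) auto
  finally have sn: "(\<Sum>i=r..int n. of_int (a i) * pw i) - browkin_s p N x = (\<Sum>i=1..int n. of_int (a i) * pw i)"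
    unfolding s by simp
  have "N (\<Sum>i=1..int n. of_int (a i) * pw i) \<le> 1 / real p"
  proof (rule N_sum_le)
    fix i assume "i \<in> {1..int n}"
    then have "real p powi (- i) \<le> real p powi (- 1)" by (intro ppowi_mono) auto
    then have "N (of_int (a i) * pw i) \<le> real p powi (- 1)" using N_term_le[of "a i" i] by linarith
    then show "N (of_int (a i) * pw i) \<le> 1 / real p" by (simp add: power_int_minus inverse_eq_divide)
  qed (use pos in auto)
  moreover have "x - browkin_s p N x = ((\<Sum>i=r..int n. of_int (a i) * pw i) - browkin_s p N x)
     - ((\<Sum>i=r..int n. of_int (a i) * pw i) - x)" by simp
  ultimately have "N (x - browkin_s p N x) \<le> max (N (\<Sum>i=1..int n. of_int (a i) * pw i)) (N ((\<Sum>i=r..int n. of_int (a i) * pw i) - x))"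
    using N_diff[of "(\<Sum>i=r..int n. of_int (a i) * pw i) - browkin_s p N x"
      "(\<Sum>i=r..int n. of_int (a i) * pw i) - x"] sn by metis
  then show ?thesis using n \<open>N (\<Sum>i=1..int n. of_int (a i) * pw i) \<le> 1 / real p\<close> by simp
qed

lemma s_N_eq: "N x > 1 \<Longrightarrow> N (browkin_s p N x) = N x"
proof -
  assume a: "N x > 1"
  have "1 / real p \<le> 1" using p_ge2 by simp
  then have "N (- (x - browkin_s p N x)) < N x" using s_close[of x] a N_uminus[of "x - browkin_s p N x"]
    by linarith
  then have "N (x + - (x - browkin_s p N x)) = N x" by (rule N_strict)
  then show ?thesis by simp
qed

end

context padic begin

lemma s_repr:
  assumes Nx: "N x > 1"
  shows "\<exists>c e. e \<ge> 1 \<and> \<not> int p dvd c \<and> 2 * \<bar>c\<bar> < int p ^ (e + 1) \<and>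
               browkin_s p N x = of_int c / of_nat p ^ e"
proof -
  obtain a where ea: "is_padic_expansion p N x a" using exp_exists by blast
  then obtain r where r: "\<forall>i<r. a i = 0" unfolding is_padic_expansion_def by blast
  have ad: "a i \<in> browkin_digits p" for i using ea unfolding is_padic_expansion_def by blast
  define r0 where "r0 = min r 0"
  have s: "browkin_s p N x = (\<Sum>i=r0..0. of_int (a i) * pw i)"
    by (rule s_sum[OF ea r]) (auto simp: r0_def)
  have Ns: "N (browkin_s p N x) > 1" using s_N_eq[OF Nx] Nx by simp
  have ex: "\<exists>i\<in>{r0..0}. a i \<noteq> 0"
  proof (rule ccontr)
    assume "\<not> ?thesis"
    then have "browkin_s p N x = 0" unfolding s by (intro sum.neutral) auto
    then show False using Ns by simp
  qed
  then obtain i0 where i0: "i0 \<in> {r0..0}" "a i0 \<noteq> 0" by blast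
  have exl: "\<exists>l. a (r0 + int l) \<noteq> 0" using i0 by (intro exI[of _ "nat (i0 - r0)"]) auto
  define l where "l = (LEAST l. a (r0 + int l) \<noteq> 0)"
  define j where "j = r0 + int l"
  have aj: "a j \<noteq> 0" unfolding j_def l_def using LeastI_ex[OF exl] .
  have "l \<le> nat (i0 - r0)" unfolding l_def using i0 by (intro Least_le) auto
  then have j0: "j \<le> 0" using i0 unfolding j_def by auto
  have alt: "a i = 0" if "i < j" for i
  proof (cases "i < r0")
    case True then show ?thesis using r that by (auto simp: r0_def)
  next
    case False
    then have "nat (i - r0) < l" using that unfolding j_def by auto
    then have "a (r0 + int (nat (i - r0))) = 0" unfolding l_def using not_less_Least by blast
    then show ?thesis using False by simp
  qed
  have s2: "browkin_s p N x = (\<Sum>i=j..0. of_int (a i) * pw i)"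
    unfolding s by (rule sum_extend[symmetric]) (use alt in \<open>auto simp: j_def\<close>)
  have jneg: "j < 0"
  proof (rule ccontr)
    assume "\<not> j < 0"
    then have "j = 0" using j0 by simp
    then have "browkin_s p N x = of_int (a 0)" unfolding s2 by simp
    then show False using Ns N_int_le1[of "a 0"] by simp
  qed
  define e where "e = nat (- j)"
  have e1: "e \<ge> 1" unfolding e_def using jneg by simp
  have je: "j = - int e" unfolding e_def using jneg by simp
  define c where "c = (\<Sum>l\<le>e. a (j + int l) * int p ^ l)"
  have "browkin_s p N x = (\<Sum>i=j..j + int e. of_int (a i) * pw i)" unfolding s2 using je by simp
  also have "\<dots> = (\<Sum>l\<le>e. of_int (a (j + int l)) * pw (j + int l))" by (rule sum_int_shift)
  also have "\<dots> = (\<Sum>l\<le>e. of_int (a (j + int l)) * of_nat p ^ l / of_nat p ^ e)"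
  proof (rule sum.cong)
    fix l assume "l \<in> {..e}"
    have ee: "j + int l = int l + - int e" using je by simp
    have "pw (j + int l) = pw (int l) * pw (- int e)" unfolding ee by (rule power_int_add) (use p_ne0 in simp)
    also have "\<dots> = of_nat p ^ l / of_nat p ^ e" by (simp add: power_int_minus divide_inverse)
    finally show "of_int (a (j + int l)) * pw (j + int l) = of_int (a (j + int l)) * of_nat p ^ l / of_nat p ^ e"
      by simp
  qed simp
  also have "\<dots> = of_int c / of_nat p ^ e" unfolding c_def by (simp add: sum_divide_distrib)
  finally have sc: "browkin_s p N x = of_int c / of_nat p ^ e" .
  obtain m where m: "e = Suc m" using e1 by (cases e) auto
  have cdec: "c = a j + int p * (\<Sum>l\<le>m. a (j + int (Suc l)) * int p ^ l)"
    unfolding c_def m sum.atMost_Suc_shift by (simp add: sum_distrib_left algebra_simps)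
  have ndvd: "\<not> int p dvd c"
  proof
    assume "int p dvd c"
    then have "int p dvd a j" using cdec by (metis dvd_add_times_triv_right_iff mult.commute)
    then show False using digit_not_dvd[OF ad aj] by simp
  qed
  have "\<bar>c\<bar> \<le> (\<Sum>l\<le>e. \<bar>a (j + int l) * int p ^ l\<bar>)" unfolding c_def by (rule sum_abs)
  also have "\<dots> \<le> (\<Sum>l\<le>e. hh * int p ^ l)"
  proof (rule sum_mono)
    fix l
    have "- hh \<le> a (j + int l) \<and> a (j + int l) \<le> hh" using ad by (simp only: digits_iff)
    then have "\<bar>a (j + int l)\<bar> \<le> hh" by (simp add: abs_le_iff)
    then show "\<bar>a (j + int l) * int p ^ l\<bar> \<le> hh * int p ^ l" by (simp add: abs_mult mult_right_mono)
  qed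
  also have "\<dots> = hh * (\<Sum>l<Suc e. int p ^ l)" by (simp add: sum_distrib_left lessThan_Suc_atMost)
  finally have "2 * \<bar>c\<bar> \<le> (2 * hh) * (\<Sum>l<Suc e. int p ^ l)" by simp
  then have "2 * \<bar>c\<bar> \<le> (int p - 1) * (\<Sum>l<Suc e. int p ^ l)" using two_hh by simp
  also have "\<dots> = int p ^ Suc e - 1" by (rule power_diff_1_eq[symmetric])
  finally have "2 * \<bar>c\<bar> < int p ^ (e + 1)" by simp
  then show ?thesis using e1 ndvd sc by blast
qed

end

definition Hp :: "int poly \<Rightarrow> real" where
  "Hp P = real_of_int (Max (abs ` set (coeffs P))) / real_of_int (content P)"

lemma quad_eq: "degree (Q::int poly) \<le> 2 \<Longrightarrow> Q = [:coeff Q 0, coeff Q 1, coeff Q 2:]"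
proof (rule poly_eqI)
  fix n assume d: "degree Q \<le> 2"
  show "coeff Q n = coeff [:coeff Q 0, coeff Q 1, coeff Q 2:] n"
  proof (cases "n \<le> 2")
    case True
    then have "n = 0 \<or> n = 1 \<or> n = 2" by auto
    then show ?thesis by (auto simp: coeff_pCons numeral_2_eq_2)
  next
    case False
    then have "coeff Q n = 0" using d by (intro coeff_eq_0) auto
    moreover have "n = Suc (Suc (Suc (n - 3)))" using False by simp
    ultimately show ?thesis by (metis coeff_pCons_Suc coeff_0)
  qed
qed

lemma ev_quad: "poly (map_poly (of_int :: int \<Rightarrow> 'a::field_char_0) [:a, b, c:]) x = of_int a + x * (of_int b + x * of_int c)"
  by (simp add: map_poly_pCons)

lemma ev_coeffs:
  assumes "degree (Q::int poly) \<le> 2"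
  shows "poly (map_poly (of_int :: int \<Rightarrow> 'a::field_char_0) Q) x = of_int (coeff Q 0) + x * (of_int (coeff Q 1) + x * of_int (coeff Q 2))"
  by (subst quad_eq[OF assms]) (simp add: map_poly_pCons)

lemma Max_abs_smult:
  assumes "c \<noteq> 0" "P \<noteq> 0"
  shows "Max (abs ` set (coeffs (smult c P))) = \<bar>c\<bar> * Max (abs ` set (coeffs (P::int poly)))"
proof -
  have "abs ` set (coeffs (smult c P)) = (\<lambda>x. \<bar>c\<bar> * x) ` (abs ` set (coeffs P))"
    using assms by (auto simp: coeffs_smult image_image abs_mult)
  moreover have "mono (\<lambda>x::int. \<bar>c\<bar> * x)" by (auto simp: mono_def mult_left_mono)
  moreover have "abs ` set (coeffs P) \<noteq> {}" using assms by simp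
  ultimately show ?thesis by (simp add: mono_Max_commute)
qed

lemma Hp_smult:
  assumes "c \<noteq> 0" "P \<noteq> 0"
  shows "Hp (smult c P) = Hp P"
  unfolding Hp_def using assms by (simp add: Max_abs_smult)

lemma Hp_le:
  assumes "P \<noteq> 0"
  shows "Hp P \<le> real_of_int (Max (abs ` set (coeffs P)))"
proof -
  have "\<bar>content P\<bar> = content P" using normalize_content[of P] by simp
  moreover have "content P \<noteq> 0" using assms by simp
  ultimately have c: "content P \<ge> 1" by linarith
  have "Max (abs ` set (coeffs P)) \<ge> 0"
  proof -
    have "set (coeffs P) \<noteq> {}" using assms by simp
    then obtain z where "z \<in> set (coeffs P)" by (meson ex_in_conv)
    then have "\<bar>z\<bar> \<le> Max (abs ` set (coeffs P))" by (intro Max_ge) auto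
    then show ?thesis by linarith
  qed
  moreover have "real_of_int (content P) \<ge> 1" using c by simp
  ultimately show ?thesis unfolding Hp_def
    by (simp add: divide_le_eq mult_le_cancel_left1)
qed

lemma int_lin_bound:
  fixes u v g0 g1 g2 :: int
  assumes cop: "coprime u v" and v0: "v \<noteq> 0"
    and eq: "g0 * v^2 - g1 * u * v + g2 * u^2 = 0"
    and nz: "\<not> (g0 = 0 \<and> g1 = 0 \<and> g2 = 0)"
  shows "max \<bar>u\<bar> \<bar>v\<bar> \<le> max \<bar>g0\<bar> (max \<bar>g1\<bar> \<bar>g2\<bar>)"
proof (cases "u = 0")
  case True
  then have "is_unit v" using cop by simp
  then have "\<bar>v\<bar> = 1" by simp
  then show ?thesis using True nz by auto
next
  case u0: False
  have vg2: "v dvd g2"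
  proof -
    have "g2*u^2 - v*(g1*u - g0*v) = g0 * v^2 - g1 * u * v + g2 * u^2" by (simp add: algebra_simps power2_eq_square)
    then have "g2*u^2 = v*(g1*u - g0*v)" using eq by linarith
    then have "v dvd g2 * u^2" by simp
    moreover have "coprime v (u^2)" using cop by (simp add: coprime_commute)
    ultimately show ?thesis using coprime_dvd_mult_left_iff by blast
  qed
  have ug0: "u dvd g0"
  proof -
    have "g0*v^2 - u*(g1*v - g2*u) = g0 * v^2 - g1 * u * v + g2 * u^2" by (simp add: algebra_simps power2_eq_square)
    then have "g0*v^2 = u*(g1*v - g2*u)" using eq by linarith
    then have "u dvd g0 * v^2" by simp
    moreover have "coprime u (v^2)" using cop by simp
    ultimately show ?thesis using coprime_dvd_mult_left_iff by blast
  qed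
  show ?thesis
  proof (cases "g2 = 0")
    case g2: True
    show ?thesis
    proof (cases "g0 = 0")
      case True
      then have "g1 * u * v = 0" using eq g2 by simp
      then show ?thesis using True g2 nz u0 v0 by simp
    next
      case g0: False
      have "g0 * v^2 = g1 * u * v" using eq g2 by simp
      then have e2: "g0 * v = g1 * u" using v0 by (simp add: power2_eq_square algebra_simps)
      have g1: "g1 \<noteq> 0" using e2 g0 v0 by auto
      have "v dvd g1 * u" unfolding e2[symmetric] by simp
      then have "v dvd g1" using cop by (simp add: coprime_commute coprime_dvd_mult_left_iff)
      then have "\<bar>v\<bar> \<le> \<bar>g1\<bar>" using g1 by (simp add: dvd_imp_le_int)
      moreover have "\<bar>u\<bar> \<le> \<bar>g0\<bar>" using ug0 g0 by (simp add: dvd_imp_le_int)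
      ultimately show ?thesis by (simp add: max_def)
    qed
  next
    case g2: False
    have vle: "\<bar>v\<bar> \<le> \<bar>g2\<bar>" using vg2 g2 by (simp add: dvd_imp_le_int)
    show ?thesis
    proof (cases "g0 = 0")
      case g0: True
      have "g2 * u^2 = g1 * u * v" using eq g0 by simp
      then have e2: "g2 * u = g1 * v" using u0 by (simp add: power2_eq_square algebra_simps)
      have g1: "g1 \<noteq> 0" using e2 g2 u0 by auto
      have "u dvd g1 * v" unfolding e2[symmetric] by simp
      then have "u dvd g1" using cop by (simp add: coprime_dvd_mult_left_iff)
      then have "\<bar>u\<bar> \<le> \<bar>g1\<bar>" using g1 by (simp add: dvd_imp_le_int)
      then show ?thesis using vle by (simp add: max_def)
    next
      case g0: False
      have "\<bar>u\<bar> \<le> \<bar>g0\<bar>" using ug0 g0 by (simp add: dvd_imp_le_int)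
      then show ?thesis using vle by (simp add: max_def)
    qed
  qed
qed

lemma coeff_le_Max:
  assumes "(G::int poly) \<noteq> 0"
  shows "\<bar>coeff G i\<bar> \<le> Max (abs ` set (coeffs G))"
proof (cases "coeff G i = 0")
  case True
  have "set (coeffs G) \<noteq> {}" using assms by simp
  then obtain z where "z \<in> set (coeffs G)" by (meson ex_in_conv)
  then have "\<bar>z\<bar> \<le> Max (abs ` set (coeffs G))" by (intro Max_ge) auto
  then show ?thesis using True by simp
next
  case False
  then have "i \<le> degree G" by (simp add: le_degree)
  then have "coeff G i \<in> set (coeffs G)" using assms by (rule coeff_in_coeffs[rotated])
  then show ?thesis by (intro Max_ge) auto
qed

lemma nh_bound:
  fixes \<alpha> :: "'a::field_char_0" and G :: "int poly"
  assumes G0: "G \<noteq> 0" and dG: "degree G \<le> 2" and zG: "poly (map_poly of_int G) \<alpha> = 0"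
  shows "naive_height \<alpha> \<le> real_of_int (Max (abs ` set (coeffs G)))"
proof -
  define V where "V Q \<longleftrightarrow> Q \<noteq> 0 \<and> poly (map_poly of_int Q) \<alpha> = 0" for Q :: "int poly"
  have VG: "V G" unfolding V_def using G0 zG by simp
  have exd: "\<exists>d. \<exists>Q. V Q \<and> degree Q = d" using VG by blast
  define d0 where "d0 = (LEAST d. \<exists>Q. V Q \<and> degree Q = d)"
  obtain P where VP: "V P" and dP0: "degree P = d0" using LeastI_ex[OF exd] unfolding d0_def by blast
  have minP: "degree P \<le> degree Q" if "V Q" for Q
    unfolding dP0 d0_def using that by (intro Least_le) blast
  have dP: "degree P \<le> 2" using minP[OF VG] dG by simp
  have ev0: "of_int (coeff Q 0) + \<alpha> * (of_int (coeff Q 1) + \<alpha> * of_int (coeff Q 2)) = (0::'a)"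
    if "V Q" "degree Q \<le> 2" for Q
    using that ev_coeffs[of Q \<alpha>] unfolding V_def by simp
  have same: "Hp Q = Hp P" if VQ: "V Q" and dQ: "degree Q = degree P" for Q
  proof -
    define R where "R = smult (lead_coeff P) Q - smult (lead_coeff Q) P"
    have cR: "coeff R n = lead_coeff P * coeff Q n - lead_coeff Q * coeff P n" for n
      unfolding R_def by simp
    have cR0: "coeff R n = 0" if "n \<ge> degree P" for n
    proof (cases "n = degree P")
      case True then show ?thesis using cR dQ by simp
    next
      case False
      then have "n > degree P" "n > degree Q" using that dQ by auto
      then show ?thesis using cR by (simp add: coeff_eq_0)
    qed
    have R0: "R = 0"
    proof (rule ccontr)
      assume Rn: "R \<noteq> 0"
      have dR: "degree R < degree P"
      proof (rule ccontr)
        assume "\<not> degree R < degree P"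
        then have "coeff R (degree R) = 0" using cR0 by simp
        then show False using Rn by simp
      qed
      have dR2: "degree R \<le> 2" using dR dP by simp
      have "poly (map_poly of_int R) \<alpha> = of_int (coeff R 0) + \<alpha> * (of_int (coeff R 1) + \<alpha> * of_int (coeff R 2))"
        by (rule ev_coeffs[OF dR2])
      also have "\<dots> = of_int (lead_coeff P) * (of_int (coeff Q 0) + \<alpha> * (of_int (coeff Q 1) + \<alpha> * of_int (coeff Q 2)))
          - of_int (lead_coeff Q) * (of_int (coeff P 0) + \<alpha> * (of_int (coeff P 1) + \<alpha> * of_int (coeff P 2)))"
        unfolding cR by (simp add: algebra_simps)
      also have "\<dots> = 0" using ev0[OF VQ] ev0[OF VP] dQ dP by simp
      finally have "V R" unfolding V_def using Rn by simp
      then show False using minP dR by fastforce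
    qed
    have lP: "lead_coeff P \<noteq> 0" and lQ: "lead_coeff Q \<noteq> 0" using VP VQ unfolding V_def by auto
    have "smult (lead_coeff P) Q = smult (lead_coeff Q) P" using R0 unfolding R_def by simp
    then have "Hp (smult (lead_coeff P) Q) = Hp (smult (lead_coeff Q) P)" by simp
    then show ?thesis using Hp_smult lP lQ VP VQ unfolding V_def by simp
  qed
  have nhP: "naive_height \<alpha> = Hp P"
    unfolding naive_height_def
  proof (rule the_equality)
    show "\<exists>P'. P' \<noteq> 0 \<and> poly (map_poly of_int P') \<alpha> = 0 \<and>
        (\<forall>Q. Q \<noteq> 0 \<and> poly (map_poly of_int Q) \<alpha> = 0 \<longrightarrow> degree P' \<le> degree Q) \<and>
        Hp P = real_of_int (Max (abs ` set (coeffs P'))) / real_of_int (content P')"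
      using VP minP unfolding V_def Hp_def by (intro exI[of _ P]) auto
  next
    fix h assume "\<exists>P'. P' \<noteq> 0 \<and> poly (map_poly of_int P') \<alpha> = 0 \<and>
        (\<forall>Q. Q \<noteq> 0 \<and> poly (map_poly of_int Q) \<alpha> = 0 \<longrightarrow> degree P' \<le> degree Q) \<and>
        h = real_of_int (Max (abs ` set (coeffs P'))) / real_of_int (content P')"
    then obtain P' where VP': "V P'" and minP': "\<forall>Q. V Q \<longrightarrow> degree P' \<le> degree Q"
      and h: "h = Hp P'" unfolding V_def Hp_def by blast
    have "degree P' = degree P" using minP'[rule_format, OF VP] minP[OF VP'] by simp
    then show "h = Hp P" using same[OF VP'] h by simp
  qed
  show ?thesis
  proof (cases "degree P")
    case 0
    then have "coeff P 1 = 0" "coeff P 2 = 0" by (simp_all add: coeff_eq_0)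
    then have "coeff P 0 = 0" using ev0[OF VP dP] by simp
    then have "P = 0" using 0 by (metis leading_coeff_0_iff)
    then show ?thesis using VP unfolding V_def by simp
  next
    case (Suc m)
    show ?thesis
    proof (cases "degree P = 2")
      case True
      have "degree G = degree P" using minP[OF VG] dG True by simp
      then have "Hp G = Hp P" using same[OF VG] by simp
      then show ?thesis using nhP Hp_le[OF G0] by simp
    next
      case False
      then have d1: "degree P = 1" using Suc dP by simp
      define a0 where "a0 = coeff P 0"
      define a1 where "a1 = coeff P 1"
      have c2: "coeff P 2 = 0" using d1 by (simp add: coeff_eq_0)
      have a1n: "a1 \<noteq> 0" unfolding a1_def using d1 VP unfolding V_def by (metis leading_coeff_0_iff)
      have Peq: "P = [:a0, a1:]" using quad_eq[OF dP] c2 unfolding a0_def a1_def by simp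
      have lin: "of_int a0 + \<alpha> * of_int a1 = (0::'a)" using ev0[OF VP dP] c2 unfolding a0_def a1_def by simp
      define g where "g = gcd a0 a1"
      have g0: "g > 0" unfolding g_def using a1n by simp
      define u where "u = a0 div g"
      define v where "v = a1 div g"
      have au: "a0 = g * u" unfolding u_def g_def by simp
      have av: "a1 = g * v" unfolding v_def g_def by simp
      have cop: "coprime u v" unfolding u_def v_def g_def using a1n by (intro div_gcd_coprime) auto
      have v0: "v \<noteq> 0" using av a1n by auto
      have HpP: "Hp P = real_of_int (max \<bar>u\<bar> \<bar>v\<bar>)"
      proof -
        have "coeffs P = [a0, a1]" using Peq a1n by simp
        then have "Max (abs ` set (coeffs P)) = max \<bar>a0\<bar> \<bar>a1\<bar>" by simp
        also have "\<dots> = g * max \<bar>u\<bar> \<bar>v\<bar>" using au av g0 by (simp add: abs_mult max_mult_distrib_left)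
        finally have M: "Max (abs ` set (coeffs P)) = g * max \<bar>u\<bar> \<bar>v\<bar>" .
        have "content P = gcd a0 a1" using Peq a1n by (simp add: content_def)
        then show ?thesis unfolding Hp_def M using g0 by (simp add: g_def)
      qed
      define g0' where "g0' = coeff G 0"
      define g1' where "g1' = coeff G 1"
      define g2' where "g2' = coeff G 2"
      have uv: "of_int u + \<alpha> * of_int v = (0::'a)"
      proof -
        have "of_int g * (of_int u + \<alpha> * of_int v) = (0::'a)" using lin au av by (simp add: algebra_simps)
        then show ?thesis using g0 by simp
      qed
      have eG: "of_int g0' + \<alpha> * (of_int g1' + \<alpha> * of_int g2') = (0::'a)"
        using ev0[OF VG dG] unfolding g0'_def g1'_def g2'_def .
      have "(of_int (g0' * v^2 - g1' * u * v + g2' * u^2) :: 'a)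
          = of_int v ^ 2 * (of_int g0' + \<alpha> * (of_int g1' + \<alpha> * of_int g2'))"
      proof -
        have uu: "(of_int u :: 'a) = - (\<alpha> * of_int v)" using uv by (simp add: eq_neg_iff_add_eq_0)
        have "(of_int (g0' * v^2 - g1' * u * v + g2' * u^2) :: 'a)
          = of_int g0' * of_int v^2 - of_int g1' * of_int u * of_int v + of_int g2' * (of_int u)^2" by simp
        also have "\<dots> = of_int v ^ 2 * (of_int g0' + \<alpha> * (of_int g1' + \<alpha> * of_int g2'))"
          unfolding uu by (simp add: algebra_simps power2_eq_square)
        finally show ?thesis .
      qed
      then have "(of_int (g0' * v^2 - g1' * u * v + g2' * u^2) :: 'a) = 0" using eG by simp
      then have ieq: "g0' * v^2 - g1' * u * v + g2' * u^2 = 0" by (simp only: of_int_eq_0_iff)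
      have nz: "\<not> (g0' = 0 \<and> g1' = 0 \<and> g2' = 0)"
      proof
        assume "g0' = 0 \<and> g1' = 0 \<and> g2' = 0"
        then have "G = 0" using quad_eq[OF dG] unfolding g0'_def g1'_def g2'_def by simp
        then show False using G0 by simp
      qed
      have "max \<bar>u\<bar> \<bar>v\<bar> \<le> max \<bar>g0'\<bar> (max \<bar>g1'\<bar> \<bar>g2'\<bar>)" by (rule int_lin_bound[OF cop v0 ieq nz])
      also have "\<dots> \<le> Max (abs ` set (coeffs G))"
        using coeff_le_Max[OF G0, of 0] coeff_le_Max[OF G0, of 1] coeff_le_Max[OF G0, of 2]
        unfolding g0'_def g1'_def g2'_def by simp
      finally show ?thesis using nhP HpP by simp
    qed
  qed
qed

fun Aseq :: "(nat \<Rightarrow> 'a::field) \<Rightarrow> nat \<Rightarrow> 'a" where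
  "Aseq b 0 = 0"
| "Aseq b (Suc 0) = 1"
| "Aseq b (Suc (Suc n)) = b n * Aseq b (Suc n) + Aseq b n"

fun Es :: "(nat \<Rightarrow> nat) \<Rightarrow> nat \<Rightarrow> nat" where
  "Es e 0 = 0"
| "Es e (Suc 0) = 0"
| "Es e (Suc (Suc n)) = Es e (Suc n) + e n"

definition pe :: "(nat \<Rightarrow> nat) \<Rightarrow> nat \<Rightarrow> nat" where
  "pe e n = e n + (case n of 0 \<Rightarrow> 0 | Suc m \<Rightarrow> e m)"

lemma Es_pe: "Es e (Suc (Suc n)) = Es e n + pe e n"
  by (cases n) (simp_all add: pe_def)

lemma Es_mono_Suc: "Es e n \<le> Es e (Suc n)"
  by (cases n) simp_all

lemma Es_mono: "m \<le> n \<Longrightarrow> Es e m \<le> Es e n"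
  by (induction n) (auto simp: le_Suc_eq intro: order_trans[OF _ Es_mono_Suc])

fun XI :: "nat \<Rightarrow> (nat \<Rightarrow> int) \<Rightarrow> (nat \<Rightarrow> nat) \<Rightarrow> int \<Rightarrow> int \<Rightarrow> nat \<Rightarrow> int" where
  "XI q c e x0 x1 0 = x0"
| "XI q c e x0 x1 (Suc 0) = x1"
| "XI q c e x0 x1 (Suc (Suc n)) = c n * XI q c e x0 x1 (Suc n) + int q ^ pe e n * XI q c e x0 x1 n"

lemma XI_rel:
  fixes X bb :: "nat \<Rightarrow> 'a::field"
  assumes bb: "\<And>n. bb n = of_int (c n) / of_nat q ^ e n" and q: "(of_nat q :: 'a) \<noteq> 0"
    and X0: "X 0 = of_int x0" and X1: "X 1 = of_int x1"
    and XS: "\<And>n. X (Suc (Suc n)) = bb n * X (Suc n) + X n"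
  shows "X n * of_nat q ^ Es e n = of_int (XI q c e x0 x1 n)"
proof -
  have "X n * of_nat q ^ Es e n = of_int (XI q c e x0 x1 n) \<and>
        X (Suc n) * of_nat q ^ Es e (Suc n) = of_int (XI q c e x0 x1 (Suc n))"
  proof (induction n)
    case 0 then show ?case using X0 X1 by simp
  next
    case (Suc n)
    have h1: "bb n * X (Suc n) * of_nat q ^ Es e (Suc (Suc n)) = bb n * of_nat q ^ e n * (X (Suc n) * of_nat q ^ Es e (Suc n))"
      by (simp only: Es.simps power_add) (simp add: algebra_simps)
    have h2: "X n * of_nat q ^ Es e (Suc (Suc n)) = of_nat q ^ pe e n * (X n * of_nat q ^ Es e n)"
      by (simp only: Es_pe power_add) (simp add: algebra_simps)
    have "X (Suc (Suc n)) * of_nat q ^ Es e (Suc (Suc n))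
        = bb n * of_nat q ^ e n * (X (Suc n) * of_nat q ^ Es e (Suc n)) + of_nat q ^ pe e n * (X n * of_nat q ^ Es e n)"
      unfolding XS distrib_right h1 h2 by simp
    also have "bb n * of_nat q ^ e n = of_int (c n)" using q by (simp add: bb)
    finally show ?case using Suc by simp
  qed
  then show ?thesis by blast
qed

lemma XI_bound:
  assumes q2: "q \<ge> 2" and c0: "c 0 = 0" and e0: "e 0 = 0"
    and ce: "\<And>n. n \<ge> 1 \<Longrightarrow> e n \<ge> 1 \<and> 2 * \<bar>c n\<bar> \<le> int q ^ (2 * e n)"
    and x0: "\<bar>x0\<bar> \<le> 1" and x1: "\<bar>x1\<bar> \<le> 1"
  shows "\<bar>XI q c e x0 x1 n\<bar> \<le> int q ^ (2 * Es e n)"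
proof -
  have "\<bar>XI q c e x0 x1 n\<bar> \<le> int q ^ (2 * Es e n) \<and> \<bar>XI q c e x0 x1 (Suc n)\<bar> \<le> int q ^ (2 * Es e (Suc n))"
  proof (induction n)
    case 0 then show ?case using x0 x1 by simp
  next
    case (Suc n)
    have IH1: "\<bar>XI q c e x0 x1 n\<bar> \<le> int q ^ (2 * Es e n)" and IH2: "\<bar>XI q c e x0 x1 (Suc n)\<bar> \<le> int q ^ (2 * Es e (Suc n))"
      using Suc by auto
    have "\<bar>XI q c e x0 x1 (Suc (Suc n))\<bar> \<le> int q ^ (2 * Es e (Suc (Suc n)))"
    proof (cases "n = 0")
      case True
      then show ?thesis using c0 e0 x0 by (simp add: pe_def)
    next
      case False
      then have en: "e n \<ge> 1" and cn: "2 * \<bar>c n\<bar> \<le> int q ^ (2 * e n)" using ce[of n] by auto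
      have peq: "pe e n \<ge> 1" using en unfolding pe_def by simp
      have E2: "Es e (Suc (Suc n)) = Es e (Suc n) + e n" by simp
      have E2': "Es e (Suc (Suc n)) = Es e n + pe e n" by (rule Es_pe)
      have t1: "2 * \<bar>c n * XI q c e x0 x1 (Suc n)\<bar> \<le> int q ^ (2 * Es e (Suc (Suc n)))"
      proof -
        have "2 * \<bar>c n * XI q c e x0 x1 (Suc n)\<bar> = (2 * \<bar>c n\<bar>) * \<bar>XI q c e x0 x1 (Suc n)\<bar>" by (simp add: abs_mult)
        also have "\<dots> \<le> int q ^ (2 * e n) * int q ^ (2 * Es e (Suc n))"
          using cn IH2 by (intro mult_mono) auto
        also have "\<dots> = int q ^ (2 * Es e (Suc (Suc n)))" unfolding E2 by (simp add: power_add[symmetric] algebra_simps)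
        finally show ?thesis .
      qed
      have t2: "2 * \<bar>int q ^ pe e n * XI q c e x0 x1 n\<bar> \<le> int q ^ (2 * Es e (Suc (Suc n)))"
      proof -
        have "2 \<le> int q ^ pe e n"
        proof -
          have h: "int q ^ 1 \<le> int q ^ pe e n" by (rule power_increasing) (use peq q2 in auto)
          have "int q \<ge> 2" using q2 by simp
          then show ?thesis using h by (simp only: power_one_right)
        qed
        have "2 * \<bar>int q ^ pe e n * XI q c e x0 x1 n\<bar> = 2 * int q ^ pe e n * \<bar>XI q c e x0 x1 n\<bar>" by (simp add: abs_mult)
        also have "\<dots> \<le> int q ^ pe e n * int q ^ pe e n * int q ^ (2 * Es e n)"
          using IH1 \<open>2 \<le> int q ^ pe e n\<close> by (intro mult_mono) auto
        also have "\<dots> = int q ^ (2 * Es e (Suc (Suc n)))" unfolding E2' by (simp add: power_add[symmetric] algebra_simps)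
        finally show ?thesis .
      qed
      have "\<bar>XI q c e x0 x1 (Suc (Suc n))\<bar> \<le> \<bar>c n * XI q c e x0 x1 (Suc n)\<bar> + \<bar>int q ^ pe e n * XI q c e x0 x1 n\<bar>"
        by (simp only: XI.simps abs_triangle_ineq)
      then show ?thesis using t1 t2 by linarith
    qed
    then show ?case using IH2 by simp
  qed
  then show ?thesis by blast
qed

lemma det_AB: "Aseq b (Suc n) * browkin_B b n - Aseq b n * browkin_B b (Suc n) = (-1) ^ n"
proof (induction n)
  case 0 then show ?case by simp
next
  case (Suc n)
  have "Aseq b (Suc (Suc n)) * browkin_B b (Suc n) - Aseq b (Suc n) * browkin_B b (Suc (Suc n))
      = - (Aseq b (Suc n) * browkin_B b n - Aseq b n * browkin_B b (Suc n))"
    by (simp add: algebra_simps)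
  then show ?case using Suc by simp
qed

locale cf = padic p N for p :: nat and N :: "'a::field_char_0 \<Rightarrow> real" +
  fixes \<alpha> :: 'a and b :: "nat \<Rightarrow> 'a" and k t :: nat
  assumes k1: "k \<ge> 1"
    and nzs: "\<forall>i. browkin_alpha p N \<alpha> i \<noteq> browkin_s p N (browkin_alpha p N \<alpha> i)"
    and bdef: "\<forall>i. b i = browkin_s p N (browkin_alpha p N \<alpha> i)"
    and b0: "b 0 = 0"
    and per: "\<forall>i\<ge>k + 1. b (i + (t + 1)) = b i"
begin

abbreviation al :: "nat \<Rightarrow> 'a" where "al i \<equiv> browkin_alpha p N \<alpha> i"

lemma al_Suc: "al (Suc i) = inverse (al i - b i)"
  using bdef by simp

lemma al_nz: "al i - b i \<noteq> 0" using nzs bdef by simp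

lemma al_inv: "(al i - b i) * al (Suc i) = 1"
  using al_Suc al_nz by simp

lemma al_eq: "al i = b i + inverse (al (Suc i))"
  using al_Suc al_nz by simp

lemma al_close: "N (al i - b i) \<le> 1 / real p"
  using s_close bdef by simp

lemma al_big: "N (al (Suc i)) \<ge> real p"
proof -
  have pos: "N (al i - b i) > 0" using al_nz N_nonneg N_zero_iff by (metis less_le)
  have "N (al (Suc i)) = 1 / N (al i - b i)" using al_Suc N_inverse by (simp add: inverse_eq_divide)
  also have "\<dots> \<ge> real p" using al_close[of i] pos p_ge2 by (simp add: field_simps)
  finally show ?thesis .
qed

lemma al_big1: "i \<ge> 1 \<Longrightarrow> N (al i) > 1"
proof -
  assume "i \<ge> 1"
  then obtain j where "i = Suc j" by (cases i) auto
  then show ?thesis using al_big[of j] p_ge2 by simp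
qed

lemma b_repr_ex: "i \<ge> 1 \<Longrightarrow> \<exists>c e. e \<ge> 1 \<and> \<not> int p dvd c \<and> 2 * \<bar>c\<bar> < int p ^ (e + 1) \<and> b i = of_int c / of_nat p ^ e"
  using s_repr[OF al_big1] bdef by simp

definition Qce :: "nat \<Rightarrow> int \<times> nat \<Rightarrow> bool" where
  "Qce i ce \<longleftrightarrow> snd ce \<ge> 1 \<and> \<not> int p dvd fst ce \<and> 2 * \<bar>fst ce\<bar> < int p ^ (snd ce + 1) \<and>
     b i = of_int (fst ce) / of_nat p ^ snd ce"

definition cef :: "nat \<Rightarrow> int \<times> nat" where "cef = (SOME f. \<forall>i. i \<ge> 1 \<longrightarrow> Qce i (f i))"

lemma cef: "i \<ge> 1 \<Longrightarrow> Qce i (cef i)"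
proof -
  have "\<forall>i. \<exists>ce. i \<ge> 1 \<longrightarrow> Qce i ce"
  proof
    fix i show "\<exists>ce. i \<ge> 1 \<longrightarrow> Qce i ce"
    proof (cases "i \<ge> 1")
      case True
      then obtain c e where "e \<ge> 1 \<and> \<not> int p dvd c \<and> 2 * \<bar>c\<bar> < int p ^ (e + 1) \<and> b i = of_int c / of_nat p ^ e"
        using b_repr_ex by blast
      then have "Qce i (c, e)" unfolding Qce_def by simp
      then show ?thesis by blast
    qed simp
  qed
  then have "\<exists>f. \<forall>i. i \<ge> 1 \<longrightarrow> Qce i (f i)" by (rule choice)
  then have "\<forall>i. i \<ge> 1 \<longrightarrow> Qce i (cef i)" unfolding cef_def by (rule someI_ex)
  then show "i \<ge> 1 \<Longrightarrow> Qce i (cef i)" by blast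
qed

definition cc :: "nat \<Rightarrow> int" where "cc i = (if i = 0 then 0 else fst (cef i))"
definition ee :: "nat \<Rightarrow> nat" where "ee i = (if i = 0 then 0 else snd (cef i))"

lemma ce_props:
  assumes "i \<ge> 1"
  shows "ee i \<ge> 1" "\<not> int p dvd cc i" "2 * \<bar>cc i\<bar> < int p ^ (ee i + 1)"
proof -
  have "Qce i (cef i)" using cef assms by simp
  then have "snd (cef i) \<ge> 1 \<and> \<not> int p dvd fst (cef i) \<and> 2 * \<bar>fst (cef i)\<bar> < int p ^ (snd (cef i) + 1)"
    unfolding Qce_def by blast
  moreover have "cc i = fst (cef i)" "ee i = snd (cef i)" using assms by (simp_all add: cc_def ee_def)
  ultimately show "ee i \<ge> 1" "\<not> int p dvd cc i" "2 * \<bar>cc i\<bar> < int p ^ (ee i + 1)" by simp_all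
qed

lemma b_cc: "b i = of_int (cc i) / of_nat p ^ ee i"
proof (cases "i = 0")
  case True then show ?thesis using b0 by (simp add: cc_def ee_def)
next
  case False
  then have "Qce i (cef i)" using cef by simp
  then have "b i = of_int (fst (cef i)) / of_nat p ^ snd (cef i)" unfolding Qce_def by blast
  then show ?thesis using False by (simp add: cc_def ee_def)
qed

lemma cc0: "cc 0 = 0" and ee0: "ee 0 = 0" unfolding cc_def ee_def by auto

lemma N_b: "i \<ge> 1 \<Longrightarrow> N (b i) = real p ^ ee i"
proof -
  assume i: "i \<ge> 1"
  have "N (b i) = N (of_int (cc i) :: 'a) / N ((of_nat p :: 'a) ^ ee i)" by (subst b_cc) (rule N_divide)
  also have "N (of_int (cc i) :: 'a) = 1" by (rule N_int_unit[OF ce_props(2)[OF i]])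
  also have "N ((of_nat p :: 'a) ^ ee i) = 1 / real p ^ ee i" by (rule N_ppow)
  also have "1 / (1 / real p ^ ee i) = real p ^ ee i" by simp
  finally show ?thesis .
qed

lemma cc_bound: "i \<ge> 1 \<Longrightarrow> ee i \<ge> 1 \<and> 2 * \<bar>cc i\<bar> \<le> int p ^ (2 * ee i)"
proof -
  assume i: "i \<ge> 1"
  have "int p ^ (ee i + 1) \<le> int p ^ (2 * ee i)" using ce_props(1)[OF i] p_ge2 by (intro power_increasing) auto
  then show ?thesis using ce_props[OF i] by simp
qed

abbreviation E :: "nat \<Rightarrow> nat" where "E \<equiv> Es ee"
abbreviation BB :: "nat \<Rightarrow> 'a" where "BB \<equiv> browkin_B b"
abbreviation AA :: "nat \<Rightarrow> 'a" where "AA \<equiv> Aseq b"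
abbreviation BI :: "nat \<Rightarrow> int" where "BI \<equiv> XI p cc ee 1 0"
abbreviation AI :: "nat \<Rightarrow> int" where "AI \<equiv> XI p cc ee 0 1"

lemma BI_rel: "BB n * of_nat p ^ E n = of_int (BI n)"
  by (rule XI_rel[where bb = b]) (use b_cc p_ne0 in simp_all)

lemma AI_rel: "AA n * of_nat p ^ E n = of_int (AI n)"
  by (rule XI_rel[where bb = b]) (use b_cc p_ne0 in simp_all)

lemma BI_bound: "\<bar>BI n\<bar> \<le> int p ^ (2 * E n)"
  by (rule XI_bound) (use p_ge2 cc0 ee0 cc_bound in simp_all)

lemma AI_bound: "\<bar>AI n\<bar> \<le> int p ^ (2 * E n)"
  by (rule XI_bound) (use p_ge2 cc0 ee0 cc_bound in simp_all)

lemma N_BB: "N (BB (Suc (Suc n))) = real p ^ E (Suc (Suc n))"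
proof (induction n rule: less_induct)
  case (less n)
  show ?case
  proof (cases n)
    case 0 then show ?thesis using b0 by (simp add: N_one ee0)
  next
    case (Suc m)
    show ?thesis
    proof (cases m)
      case 0
      then show ?thesis using Suc N_b[of 1] b0 by (simp add: ee0)
    next
      case (Suc m')
      have n1: "n \<ge> 1" using \<open>n = Suc m\<close> by simp
      have IH1: "N (BB n) = real p ^ E n" using less[of m'] Suc \<open>n = Suc m\<close> by simp
      have IH2: "N (BB (Suc n)) = real p ^ E (Suc n)" using less[of m] Suc \<open>n = Suc m\<close> by simp
      have t1: "N (b n * BB (Suc n)) = real p ^ E (Suc (Suc n))" using N_b[OF n1] IH2 by (simp add: N_mult power_add)
      have "pe ee n \<ge> 1" using ce_props(1)[OF n1] unfolding pe_def by simp
      then have "E n < E (Suc (Suc n))" unfolding Es_pe by simp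
      then have "real p ^ E n < real p ^ E (Suc (Suc n))" using p_ge2 by (intro power_strict_increasing) auto
      then have "N (BB n) < N (b n * BB (Suc n))" using IH1 t1 by simp
      then have "N (b n * BB (Suc n) + BB n) = N (b n * BB (Suc n))" by (rule N_strict)
      then show ?thesis using t1 by simp
    qed
  qed
qed

end

context cf begin

definition dd :: "nat \<Rightarrow> 'a" where "dd j = \<alpha> * BB j - AA j"

lemma al0: "al 0 = \<alpha>" by simp

lemma alpha_nz: "\<alpha> \<noteq> 0" using al_nz[of 0] b0 by simp

lemma dd_rec: "dd (Suc (Suc n)) = b n * dd (Suc n) + dd n"
  unfolding dd_def by (simp add: algebra_simps)

lemma dd_R: "al (Suc n) * dd (Suc (Suc n)) = - dd (Suc n)"
proof (induction n)
  case 0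
  have "al (Suc 0) = inverse \<alpha>" using al_Suc[of 0] b0 by simp
  then show ?case using alpha_nz b0 by (simp add: dd_def)
next
  case (Suc n)
  have "al (Suc (Suc n)) * dd (Suc (Suc (Suc n)))
      = al (Suc (Suc n)) * (b (Suc n) * dd (Suc (Suc n)) + dd (Suc n))" by (simp only: dd_rec)
  also have "dd (Suc n) = - (al (Suc n) * dd (Suc (Suc n)))" using Suc by simp
  also have "al (Suc (Suc n)) * (b (Suc n) * dd (Suc (Suc n)) + - (al (Suc n) * dd (Suc (Suc n))))
      = - (dd (Suc (Suc n)) * ((al (Suc n) - b (Suc n)) * al (Suc (Suc n))))" by (simp add: algebra_simps)
  also have "(al (Suc n) - b (Suc n)) * al (Suc (Suc n)) = 1" by (rule al_inv)
  finally show ?case by simp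
qed

lemma dd_nz: "dd (Suc n) \<noteq> 0"
proof (induction n)
  case 0 then show ?case by (simp add: dd_def)
next
  case (Suc n)
  then show ?case using dd_R[of n] by auto
qed

lemma N_dd_dec: "N (dd (Suc (Suc n))) < N (dd (Suc n))"
proof -
  have "N (al (Suc n) * dd (Suc (Suc n))) = N (- dd (Suc n))" using dd_R[of n] by simp
  then have e: "N (al (Suc n)) * N (dd (Suc (Suc n))) = N (dd (Suc n))" by (simp add: N_mult N_uminus)
  have g: "N (al (Suc n)) > 1" using al_big[of n] p_ge2 by simp
  have "N (dd (Suc (Suc n))) \<noteq> 0" using dd_nz[of "Suc n"] N_zero_iff by simp
  then have pos: "N (dd (Suc (Suc n))) > 0" using N_nonneg[of "dd (Suc (Suc n))"] by linarith
  have "1 * N (dd (Suc (Suc n))) < N (al (Suc n)) * N (dd (Suc (Suc n)))"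
    by (rule mult_strict_right_mono[OF g pos])
  then show ?thesis using e by simp
qed

lemma N_dd_strict: "1 \<le> i \<Longrightarrow> i < j \<Longrightarrow> N (dd j) < N (dd i)"
proof (induction j)
  case 0 then show ?case by simp
next
  case (Suc j)
  obtain i' where i': "i = Suc i'" using Suc.prems by (cases i) auto
  show ?case
  proof (cases "i = j")
    case True then show ?thesis using N_dd_dec[of i'] i' by simp
  next
    case False
    then have "N (dd j) < N (dd i)" using Suc by simp
    moreover obtain j' where "j = Suc j'" using Suc.prems by (cases j) auto
    ultimately show ?thesis using N_dd_dec[of j'] by simp
  qed
qed

lemma periodic: "al (k + 1) = al (k + t + 2)"
proof -
  define x where "x j = al (k + 1 + j)" for j
  define y where "y j = al (k + t + 2 + j)" for j
  have bxy: "b (k + 1 + j) = b (k + t + 2 + j)" for j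
    using per[rule_format, of "k + 1 + j"] by (simp add: algebra_simps)
  have xs: "x j = b (k + 1 + j) + inverse (x (Suc j))" for j unfolding x_def using al_eq[of "k + 1 + j"] by simp
  have ys: "y j = b (k + 1 + j) + inverse (y (Suc j))" for j unfolding y_def using al_eq[of "k + t + 2 + j"] bxy[of j] by simp
  have Nx: "N (x (Suc j)) \<ge> real p" for j unfolding x_def using al_big[of "k + 1 + j"] by simp
  have Ny: "N (y (Suc j)) \<ge> real p" for j unfolding y_def using al_big[of "k + t + 2 + j"] by simp
  define d where "d j = N (x j - y j)" for j
  have drec: "d j = d (Suc j) / (N (x (Suc j)) * N (y (Suc j)))" for j
  proof -
    have x0: "x (Suc j) \<noteq> 0" and y0: "y (Suc j) \<noteq> 0" using Nx[of j] Ny[of j] p_ge2 N_0 by auto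
    have "x j - y j = inverse (x (Suc j)) - inverse (y (Suc j))" using xs[of j] ys[of j] by simp
    also have "\<dots> = (y (Suc j) - x (Suc j)) / (x (Suc j) * y (Suc j))" using x0 y0 by (simp add: field_simps)
    finally have "d j = N (y (Suc j) - x (Suc j)) / (N (x (Suc j)) * N (y (Suc j)))"
      unfolding d_def by (simp add: N_divide N_mult)
    then show ?thesis unfolding d_def using N_diff_comm by simp
  qed
  have d_le1: "d j \<le> 1" for j
  proof -
    have a: "N (x (Suc j)) \<ge> 1" "N (y (Suc j)) \<ge> 1" using Nx[of j] Ny[of j] p_ge2 by auto
    have "d (Suc j) \<le> max (N (x (Suc j))) (N (y (Suc j)))" unfolding d_def by (rule N_diff)
    also have "\<dots> \<le> N (x (Suc j)) * N (y (Suc j))"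
    proof (rule max.boundedI)
      have "N (x (Suc j)) * 1 \<le> N (x (Suc j)) * N (y (Suc j))" using a by (intro mult_left_mono) auto
      then show "N (x (Suc j)) \<le> N (x (Suc j)) * N (y (Suc j))" by simp
      have "1 * N (y (Suc j)) \<le> N (x (Suc j)) * N (y (Suc j))" using a by (intro mult_right_mono) auto
      then show "N (y (Suc j)) \<le> N (x (Suc j)) * N (y (Suc j))" by simp
    qed
    finally have "d (Suc j) \<le> N (x (Suc j)) * N (y (Suc j))" .
    moreover have "N (x (Suc j)) * N (y (Suc j)) > 0" using a by simp
    ultimately show ?thesis unfolding drec[of j] by simp
  qed
  have d_step: "d j \<le> d (Suc j) * (1 / real p ^ 2)" for j
  proof -
    have "real p * real p \<le> N (x (Suc j)) * N (y (Suc j))" using Nx[of j] Ny[of j] p_ge2 by (intro mult_mono) auto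
    moreover have "d (Suc j) \<ge> 0" unfolding d_def by (rule N_nonneg)
    moreover have "real p * real p > 0" using p_ge2 by simp
    ultimately have "d (Suc j) / (N (x (Suc j)) * N (y (Suc j))) \<le> d (Suc j) / (real p * real p)"
      by (intro divide_left_mono) auto
    then show ?thesis unfolding drec[of j] by (simp add: power2_eq_square)
  qed
  have d_pow: "d 0 \<le> (1 / real p ^ 2) ^ n" for n
  proof -
    have "d 0 \<le> d n * (1 / real p ^ 2) ^ n"
    proof (induction n)
      case 0 then show ?case by simp
    next
      case (Suc n)
      have "d n * (1 / real p ^ 2) ^ n \<le> d (Suc n) * (1 / real p ^ 2) * (1 / real p ^ 2) ^ n"
        using d_step[of n] by (intro mult_right_mono) auto
      then show ?case using Suc by (simp add: algebra_simps)
    qed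
    also have "\<dots> \<le> (1 / real p ^ 2) ^ n" using d_le1[of n] by (intro mult_left_le_one_le) (auto simp: d_def N_nonneg)
    finally show ?thesis .
  qed
  have "d 0 = 0"
  proof (rule ccontr)
    assume "d 0 \<noteq> 0"
    then have "d 0 > 0" unfolding d_def using N_nonneg[of "x 0 - y 0"] by linarith
    moreover have "1 / real p ^ 2 < 1"
    proof -
      have "(1::real) < 2 * 2" by simp
      also have "2 * 2 \<le> real p * real p" using p_ge2 by (intro mult_mono) auto
      finally show ?thesis by (simp add: power2_eq_square)
    qed
    ultimately obtain n where "(1 / real p ^ 2) ^ n < d 0" using real_arch_pow_inv by blast
    then show False using d_pow[of n] by simp
  qed
  then show ?thesis unfolding d_def x_def y_def using N_zero_iff by simp
qed

end

context cf begin

definition K :: nat where "K = k + 2"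
definition M :: nat where "M = k + t + 3"
definition uu :: int where "uu = int p ^ (ee k - 1)"
definition ww :: int where "ww = int p ^ (ee (k + t + 1) - 1)"

definition LL :: "nat \<Rightarrow> 'a \<Rightarrow> 'a" where "LL j x = of_int (BI j) * x - of_int (AI j)"

lemma LL_eq: "LL j x = of_nat p ^ E j * (BB j * x - AA j)"
  unfolding LL_def BI_rel[symmetric] AI_rel[symmetric] by (simp add: algebra_simps)

definition g2 :: int where "g2 = uu * BI (k+1) * BI M - ww * BI (k+t+2) * BI K"
definition g1 :: int where "g1 = - uu * (BI (k+1) * AI M + AI (k+1) * BI M) + ww * (BI (k+t+2) * AI K + AI (k+t+2) * BI K)"
definition g0 :: int where "g0 = uu * AI (k+1) * AI M - ww * AI (k+t+2) * AI K"

definition GG :: "int poly" where "GG = [:g0, g1, g2:]"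

lemma GG_form: "poly (map_poly of_int GG) x = of_int uu * LL (k+1) x * LL M x - of_int ww * LL (k+t+2) x * LL K x"
  unfolding GG_def LL_def g0_def g1_def g2_def by (simp add: map_poly_pCons algebra_simps)

lemma ee_k: "ee k \<ge> 1" using ce_props(1) k1 by simp
lemma ee_m: "ee (k + t + 1) \<ge> 1" using ce_props(1) by simp

lemma EK: "E K = E (k + 1) + ee k" unfolding K_def by simp
lemma EM: "E M = E (k + t + 2) + ee (k + t + 1)" unfolding M_def by (simp add: numeral_3_eq_3)

lemma pow1: "(of_int uu :: 'a) * of_nat p ^ E (k+1) * of_nat p ^ E M = of_nat p ^ (E K + E M - 1)"
proof -
  have "ee k - 1 + E (k+1) + E M = E K + E M - 1" using EK ee_k by simp
  then have "(of_nat p :: 'a) ^ (ee k - 1) * of_nat p ^ E (k+1) * of_nat p ^ E M = of_nat p ^ (E K + E M - 1)"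
    by (metis power_add)
  then show ?thesis unfolding uu_def by simp
qed

lemma pow2: "(of_int ww :: 'a) * of_nat p ^ E (k+t+2) * of_nat p ^ E K = of_nat p ^ (E K + E M - 1)"
proof -
  have "ee (k+t+1) - 1 + E (k+t+2) + E K = E K + E M - 1" using EM ee_m by simp
  then have "(of_nat p :: 'a) ^ (ee (k+t+1) - 1) * of_nat p ^ E (k+t+2) * of_nat p ^ E K = of_nat p ^ (E K + E M - 1)"
    by (metis power_add)
  then show ?thesis unfolding ww_def by simp
qed

lemma key_dd: "dd (k + 1) * dd M = dd (k + t + 2) * dd K"
proof -
  have r1: "al (Suc k) * dd (Suc (Suc k)) = - dd (Suc k)" by (rule dd_R)
  have r2: "al (Suc (k + t + 1)) * dd (Suc (Suc (k + t + 1))) = - dd (Suc (k + t + 1))" by (rule dd_R)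
  have pa: "al (Suc k) = al (Suc (k + t + 1))" using periodic by simp
  have "dd (k + 1) * dd M = - (al (Suc k) * dd K * dd M)" using r1 unfolding K_def by (simp add: algebra_simps)
  also have "\<dots> = - (al (Suc (k + t + 1)) * dd M * dd K)" using pa by (simp add: algebra_simps)
  also have "\<dots> = dd (k + t + 2) * dd K" using r2 unfolding M_def by (simp add: algebra_simps numeral_3_eq_3)
  finally show ?thesis .
qed

lemma GG_root: "poly (map_poly of_int GG) \<alpha> = 0"
proof -
  have "poly (map_poly of_int GG) \<alpha>
      = (of_int uu * of_nat p ^ E (k+1) * of_nat p ^ E M) * (dd (k + 1) * dd M)
        - (of_int ww * of_nat p ^ E (k+t+2) * of_nat p ^ E K) * (dd (k + t + 2) * dd K)"
    unfolding GG_form LL_eq dd_def by (simp add: algebra_simps)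
  also have "\<dots> = 0" unfolding pow1 pow2 key_dd by simp
  finally show ?thesis .
qed

lemma BB_K_nz: "BB K \<noteq> 0"
proof -
  have "N (BB K) = real p ^ E K" unfolding K_def using N_BB[of k] by (simp add: numeral_2_eq_2)
  then show ?thesis using p_ge2 N_0 by auto
qed

lemma GG_nz: "GG \<noteq> 0"
proof
  assume G0: "GG = 0"
  define x0 where "x0 = AA K / BB K"
  have "poly (map_poly of_int GG) x0 = 0" using G0 by simp
  moreover have "LL K x0 = 0" unfolding LL_eq x0_def using BB_K_nz by simp
  ultimately have z: "of_int uu * LL (k+1) x0 * LL M x0 = 0" unfolding GG_form by simp
  have uu0: "(of_int uu :: 'a) \<noteq> 0" unfolding uu_def using p_ge2 by simp
  have l1: "LL (k+1) x0 \<noteq> 0"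
  proof -
    have "BB (k+1) * x0 - AA (k+1) = (AA (Suc (k+1)) * BB (k+1) - AA (k+1) * BB (Suc (k+1))) / BB K"
      unfolding x0_def K_def using BB_K_nz unfolding K_def by (simp add: field_simps)
    also have "\<dots> = (-1) ^ (k+1) / BB K" by (simp only: det_AB)
    finally have "BB (k+1) * x0 - AA (k+1) \<noteq> 0" using BB_K_nz by simp
    then show ?thesis unfolding LL_eq using p_ne0 by simp
  qed
  have l2: "LL M x0 \<noteq> 0"
  proof -
    have e: "BB M * x0 - AA M = (dd M * BB K - BB M * dd K) / BB K"
      unfolding x0_def dd_def using BB_K_nz by (simp add: field_simps)
    have NM: "N (BB M) = real p ^ E M" unfolding M_def using N_BB[of "k + t + 1"] by (simp add: numeral_3_eq_3)
    have NK: "N (BB K) = real p ^ E K" unfolding K_def using N_BB[of k] by (simp add: numeral_2_eq_2)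
    have dlt: "N (dd M) < N (dd K)" by (rule N_dd_strict) (auto simp: K_def M_def)
    have EKM: "real p ^ E K \<le> real p ^ E M" using p_ge2 by (intro power_increasing Es_mono) (auto simp: K_def M_def)
    have pK: "real p ^ E K > 0" using p_ge2 by simp
    have "N (dd M * BB K) = N (dd M) * real p ^ E K" using NK by (simp add: N_mult)
    also have "\<dots> \<le> N (dd M) * real p ^ E M" using EKM N_nonneg by (intro mult_left_mono) auto
    also have "\<dots> < N (dd K) * real p ^ E M" using dlt p_ge2 by (intro mult_strict_right_mono) auto
    also have "\<dots> = N (BB M * dd K)" using NM by (simp add: N_mult)
    finally have "dd M * BB K \<noteq> BB M * dd K" by auto
    then have "BB M * x0 - AA M \<noteq> 0" unfolding e using BB_K_nz by simp
    then show ?thesis unfolding LL_eq using p_ne0 by simp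
  qed
  show False using z uu0 l1 l2 by simp
qed

end

context cf begin

definition ZZ :: int where "ZZ = int p ^ (2 * E K + 2 * E M - 2)"

lemma EK1: "E K \<ge> 1" using EK ee_k by simp

lemma term1:
  assumes X: "\<bar>X\<bar> \<le> int p ^ (2 * E (k+1))" and Y: "\<bar>Y\<bar> \<le> int p ^ (2 * E M)"
  shows "\<bar>uu * X * Y\<bar> \<le> ZZ"
proof -
  have "\<bar>uu * X * Y\<bar> = uu * \<bar>X\<bar> * \<bar>Y\<bar>" unfolding uu_def by (simp add: abs_mult)
  also have "\<dots> \<le> uu * int p ^ (2 * E (k+1)) * int p ^ (2 * E M)"
    using X Y unfolding uu_def by (intro mult_mono) auto
  also have "\<dots> = int p ^ (ee k - 1 + 2 * E (k+1) + 2 * E M)" unfolding uu_def by (simp add: power_add)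
  also have "\<dots> \<le> ZZ" unfolding ZZ_def using EK ee_k p_ge2 by (intro power_increasing) auto
  finally show ?thesis .
qed

lemma term2:
  assumes X: "\<bar>X\<bar> \<le> int p ^ (2 * E (k+t+2))" and Y: "\<bar>Y\<bar> \<le> int p ^ (2 * E K)"
  shows "\<bar>ww * X * Y\<bar> \<le> ZZ"
proof -
  have "\<bar>ww * X * Y\<bar> = ww * \<bar>X\<bar> * \<bar>Y\<bar>" unfolding ww_def by (simp add: abs_mult)
  also have "\<dots> \<le> ww * int p ^ (2 * E (k+t+2)) * int p ^ (2 * E K)"
    using X Y unfolding ww_def by (intro mult_mono) auto
  also have "\<dots> = int p ^ (ee (k+t+1) - 1 + 2 * E (k+t+2) + 2 * E K)" unfolding ww_def by (simp add: power_add)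
  also have "\<dots> \<le> ZZ" unfolding ZZ_def using EM ee_m EK1 p_ge2 by (intro power_increasing) auto
  finally show ?thesis .
qed

lemma g_bounds: "\<bar>g0\<bar> \<le> 4 * ZZ" "\<bar>g1\<bar> \<le> 4 * ZZ" "\<bar>g2\<bar> \<le> 4 * ZZ"
proof -
  have a1: "\<bar>uu * AI (k+1) * AI M\<bar> \<le> ZZ" by (rule term1[OF AI_bound AI_bound])
  have a2: "\<bar>uu * BI (k+1) * BI M\<bar> \<le> ZZ" by (rule term1[OF BI_bound BI_bound])
  have a3: "\<bar>uu * BI (k+1) * AI M\<bar> \<le> ZZ" by (rule term1[OF BI_bound AI_bound])
  have a4: "\<bar>uu * AI (k+1) * BI M\<bar> \<le> ZZ" by (rule term1[OF AI_bound BI_bound])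
  have b1: "\<bar>ww * AI (k+t+2) * AI K\<bar> \<le> ZZ" by (rule term2[OF AI_bound AI_bound])
  have b2: "\<bar>ww * BI (k+t+2) * BI K\<bar> \<le> ZZ" by (rule term2[OF BI_bound BI_bound])
  have b3: "\<bar>ww * BI (k+t+2) * AI K\<bar> \<le> ZZ" by (rule term2[OF BI_bound AI_bound])
  have b4: "\<bar>ww * AI (k+t+2) * BI K\<bar> \<le> ZZ" by (rule term2[OF AI_bound BI_bound])
  have z0: "ZZ \<ge> 0" unfolding ZZ_def by simp
  have e1: "g1 = - (uu * BI (k+1) * AI M) - uu * AI (k+1) * BI M + ww * BI (k+t+2) * AI K + ww * AI (k+t+2) * BI K"
    unfolding g1_def by (simp add: algebra_simps)
  show "\<bar>g0\<bar> \<le> 4 * ZZ" unfolding g0_def using a1 b1 z0 by (simp add: abs_le_iff)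
  show "\<bar>g1\<bar> \<le> 4 * ZZ" unfolding e1 using a3 a4 b3 b4 by (simp add: abs_le_iff)
  show "\<bar>g2\<bar> \<le> 4 * ZZ" unfolding g2_def using a2 b2 z0 by (simp add: abs_le_iff)
qed

lemma GG_Max: "Max (abs ` set (coeffs GG)) \<le> 4 * ZZ"
proof -
  have sub: "set (coeffs GG) \<subseteq> {g0, g1, g2}"
    unfolding GG_def by (auto simp: cCons_def)
  have fin: "finite (abs ` set (coeffs GG))" by simp
  have ne: "abs ` set (coeffs GG) \<noteq> {}" using GG_nz by simp
  show ?thesis
  proof (subst Max_le_iff[OF fin ne], intro ballI)
    fix z assume "z \<in> abs ` set (coeffs GG)"
    then obtain y where "y \<in> {g0, g1, g2}" "z = \<bar>y\<bar>" using sub by blast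
    then show "z \<le> 4 * ZZ" using g_bounds by auto
  qed
qed

lemma GG_deg: "degree GG \<le> 2"
  unfolding GG_def using degree_pCons_le[of g0 "[:g1, g2:]"] degree_pCons_le[of g1 "[:g2:]"] by simp

lemma final:
  "naive_height \<alpha> \<le> 8 / (real p)^2 * (N (browkin_B b (k + t + 3)))^2 * (N (browkin_B b (k + 2)))^2"
proof -
  have NM: "N (browkin_B b (k + t + 3)) = real p ^ E M" unfolding M_def using N_BB[of "k + t + 1"] by (simp add: numeral_3_eq_3)
  have NK: "N (browkin_B b (k + 2)) = real p ^ E K" unfolding K_def using N_BB[of k] by (simp add: numeral_2_eq_2)
  have "naive_height \<alpha> \<le> real_of_int (Max (abs ` set (coeffs GG)))"
    by (rule nh_bound[OF GG_nz GG_deg GG_root])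
  also have "\<dots> \<le> real_of_int (4 * int p ^ (2 * E K + 2 * E M - 2))" using GG_Max unfolding ZZ_def by (simp only: of_int_le_iff)
  also have "\<dots> = 4 * real p ^ (2 * E K + 2 * E M - 2)" by simp
  also have "\<dots> \<le> 8 * real p ^ (2 * E K + 2 * E M - 2)" by simp
  also have "\<dots> = 8 / (real p)^2 * (real p ^ E M)^2 * (real p ^ E K)^2"
  proof -
    have "2 * E K + 2 * E M = (2 * E K + 2 * E M - 2) + 2" using EK1 by simp
    have m1: "(real p ^ E M)^2 = real p ^ (2 * E M)" using power_mult[of "real p" "E M" 2] by (simp add: mult.commute)
    have m2: "(real p ^ E K)^2 = real p ^ (2 * E K)" using power_mult[of "real p" "E K" 2] by (simp add: mult.commute)
    have "(real p ^ E M)^2 * (real p ^ E K)^2 = real p ^ (2 * E K + 2 * E M)" unfolding m1 m2 power_add[symmetric] by (simp add: add.commute)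
    also have "\<dots> = real p ^ (2 * E K + 2 * E M - 2) * real p ^ 2" unfolding power_add[symmetric] using \<open>2 * E K + 2 * E M = (2 * E K + 2 * E M - 2) + 2\<close> by simp
    finally have "(real p ^ E M)^2 * (real p ^ E K)^2 = real p ^ (2 * E K + 2 * E M - 2) * real p ^ 2" .
    then show ?thesis using p_ge2 by (simp add: field_simps)
  qed
  finally show ?thesis unfolding NM NK .
qed

end

theorem lemma3:
  fixes p k t :: nat and N :: "'a::field_char_0 \<Rightarrow> real" and \<alpha> :: 'a and b :: "nat \<Rightarrow> 'a"
  assumes "prime p" and "odd p"
    and "padic_field p N"
    and "k \<ge> 1"
    and "\<forall>i. browkin_alpha p N \<alpha> i \<noteq> browkin_s p N (browkin_alpha p N \<alpha> i)"
    and "\<forall>i. b i = browkin_s p N (browkin_alpha p N \<alpha> i)"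
    and "b 0 = 0"
    and "\<forall>i\<ge>k + 1. b (i + (t + 1)) = b i"
  shows "naive_height \<alpha> \<le> 8 / (real p)^2 * (N (browkin_B b (k + t + 3)))^2 * (N (browkin_B b (k + 2)))^2"
proof -
  interpret cf p N \<alpha> b k t
    by (unfold_locales) (use assms in simp_all)
  show ?thesis by (rule final)
qed

end
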